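(* The involution $X\mapsto\overline X$ is, on the level of functions on $\mathrm{Spec}\,R$, complex conjugation: for every $X\in QH^*(G,\mathbb Z)$ and every point $p\in\mathrm{Spec}\,R$, one has $\overline X(p)=\overline{X(p)}$, the right-hand side being the complex conjugate of the complex number $X(p)$.
   Context: Let $0<k<n$ be integers, $l=n-k$, and $G=G(k,n)$ the Grassmannian of $k$-planes in $\mathbb C^n$. Schubert classes $S_\lambda$ of $G$ are indexed by Young diagrams $\lambda=(\lambda_1\ge\dots\ge\lambda_l\ge0)$ with $\lambda_1\le k$. $QH^*(G,\mathbb Z)$ denotes the small quantum cohomology ring of $G$ with the quantum parameter $q$ set equal to $1$, a free $\mathbb Z$-module with basis the Schubert classes, product denoted $*$. The operator $X\mapsto\overline X$ is defined on Schubert classes and extended $\mathbb Z$-linearly: for $\lambda$ let $d_\lambda$ be the largest $i$ with $\lambda_i\ge i$ ($0$ if none); then $\overline{S_\lambda}=S_\mu$ with $\mu_i=d_\lambda+k-\lambda_{d_\lambda-i+1}$ for $i\le d_\lambda$ and $\mu_i=d_\lambda-\lambda_{l-i+d_\lambda+1}$ for $i>d_\lambda$. Let $R=QH^*(G,\mathbb C)=QH^*(G,\mathbb Z)\otimes\mathbb C$. It is known that $R$ is a semisimple commutative $\mathbb C$-algebra, so $\mathrm{Spec}\,R$ is a finite set of reduced points and $R$ is identified with the algebra of $\mathbb C$-valued functions on $\mathrm{Spec}\,R$; each class $X$ thus gives a function $p\mapsto X(p)\in\mathbb C$, with $(X*Y)(p)=X(p)Y(p)$. *)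

theory Defs
  imports "HOL-Analysis.Analysis" "HOL-Combinatorics.Permutations"
begin

text \<open>Young diagrams \<open>\<lambda> = (\<lambda>_1 \<ge> ... \<ge> \<lambda>_l \<ge> 0)\<close> with \<open>\<lambda>_1 \<le> k\<close>, encoded as
  lists of length l; \<open>\<lambda>_i\<close> is \<open>lam ! (i - 1)\<close>.\<close>
definition ydiag :: "nat \<Rightarrow> nat \<Rightarrow> nat list set" where
  "ydiag k l = {lam. length lam = l \<and> sorted_wrt (\<ge>) lam \<and> (\<forall>x\<in>set lam. x \<le> k)}"

text \<open>Elements of the free module on the Schubert classes: coefficient functions
  (supported on \<open>ydiag k l\<close>). The Schubert class \<open>S_\<lambda>\<close>:\<close>
definition schub :: "nat list \<Rightarrow> nat list \<Rightarrow> 'a::zero_neq_one" where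
  "schub lam = (\<lambda>mu. if mu = lam then 1 else 0)"

definition supported :: "nat \<Rightarrow> nat \<Rightarrow> (nat list \<Rightarrow> 'a::zero) \<Rightarrow> bool" where
  "supported k l X \<longleftrightarrow> (\<forall>lam. lam \<notin> ydiag k l \<longrightarrow> X lam = 0)"

text \<open>Quantum Pieri rule (Bertram), q = 1: coefficient of \<open>S_\<mu>\<close> in \<open>S_(i) * S_\<lambda>\<close>,
  for \<open>0 \<le> i \<le> k\<close>, with n = k + l.\<close>
definition pieri_coeff :: "nat \<Rightarrow> nat \<Rightarrow> nat \<Rightarrow> nat list \<Rightarrow> nat list \<Rightarrow> bool" where
  "pieri_coeff k l i lam mu \<longleftrightarrow> mu \<in> ydiag k l \<and>
     ((sum_list mu = sum_list lam + i \<and> (\<forall>j<l. lam ! j \<le> mu ! j)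
         \<and> (\<forall>j. j + 1 < l \<longrightarrow> mu ! (j + 1) \<le> lam ! j))
    \<or> (sum_list mu + (k + l) = sum_list lam + i \<and> (\<forall>j<l. mu ! j + 1 \<le> lam ! j)
         \<and> (\<forall>j. j + 1 < l \<longrightarrow> lam ! (j + 1) \<le> mu ! j + 1)))"

text \<open>Multiplication by the special Schubert class \<open>S_(e)\<close> (zero unless \<open>0 \<le> e \<le> k\<close>).\<close>
definition special_op :: "nat \<Rightarrow> nat \<Rightarrow> int \<Rightarrow> (nat list \<Rightarrow> 'a::comm_ring_1) \<Rightarrow> nat list \<Rightarrow> 'a" where
  "special_op k l e Y = (\<lambda>mu. if 0 \<le> e \<and> e \<le> int k
      then (\<Sum>lam\<in>ydiag k l. if pieri_coeff k l (nat e) lam mu then Y lam else 0)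
      else 0)"

text \<open>Multiplication by \<open>S_\<lambda>\<close>, via the (quantum) Giambelli formula
  \<open>S_\<lambda> = det (S_(\<lambda>_i + j - i))_{1\<le>i,j\<le>l}\<close>.\<close>
definition giambelli_op :: "nat \<Rightarrow> nat \<Rightarrow> nat list \<Rightarrow> (nat list \<Rightarrow> 'a::comm_ring_1) \<Rightarrow> nat list \<Rightarrow> 'a" where
  "giambelli_op k l lam Y = (\<lambda>mu. \<Sum>w\<in>{w. w permutes {..<l}}.
      of_int (sign w) *
      foldr (\<lambda>i acc. special_op k l (int (lam ! i) + int (w i) - int i) acc) [0..<l] Y mu)"

text \<open>The quantum product \<open>*\<close> (q = 1) on \<open>QH^*(G(k,n))\<close>, l = n - k.\<close>
definition qprod :: "nat \<Rightarrow> nat \<Rightarrow> (nat list \<Rightarrow> 'a::comm_ring_1) \<Rightarrow> (nat list \<Rightarrow> 'a) \<Rightarrow> nat list \<Rightarrow> 'a" where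
  "qprod k l X Y = (\<lambda>nu. \<Sum>lam\<in>ydiag k l. X lam * giambelli_op k l lam Y nu)"

text \<open>Value of a class X at a point of Spec R, the point being given by the values
  \<open>chi \<lambda>\<close> of the Schubert classes.\<close>
definition evalpt :: "nat \<Rightarrow> nat \<Rightarrow> (nat list \<Rightarrow> complex) \<Rightarrow> (nat list \<Rightarrow> complex) \<Rightarrow> complex" where
  "evalpt k l chi X = (\<Sum>lam\<in>ydiag k l. X lam * chi lam)"

text \<open>Points of Spec R = \<open>\<complex>\<close>-algebra homomorphisms \<open>R \<rightarrow> \<complex>\<close>, R = QH^*(G, \<complex>).\<close>
definition spec_point :: "nat \<Rightarrow> nat \<Rightarrow> (nat list \<Rightarrow> complex) \<Rightarrow> bool" where
  "spec_point k l chi \<longleftrightarrow>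
     evalpt k l chi (schub (replicate l 0)) = 1 \<and>
     (\<forall>X Y. supported k l X \<longrightarrow> supported k l Y \<longrightarrow>
        evalpt k l chi (qprod k l X Y) = evalpt k l chi X * evalpt k l chi Y)"

definition durfee :: "nat \<Rightarrow> nat list \<Rightarrow> nat" where
  "durfee l lam = (if \<exists>i\<in>{1..l}. i \<le> lam ! (i - 1)
      then Max {i\<in>{1..l}. i \<le> lam ! (i - 1)} else 0)"

definition bar_diag :: "nat \<Rightarrow> nat \<Rightarrow> nat list \<Rightarrow> nat list" where
  "bar_diag k l lam = (let d = durfee l lam in
     map (\<lambda>i. if i \<le> d then d + k - lam ! (d - i) else d - lam ! (l - i + d)) [1..<l+1])"

text \<open>The involution \<open>X \<mapsto> \<overline>X\<close>, extended \<open>\<int>\<close>-linearly.\<close>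
definition qbar :: "nat \<Rightarrow> nat \<Rightarrow> (nat list \<Rightarrow> 'a::comm_ring_1) \<Rightarrow> nat list \<Rightarrow> 'a" where
  "qbar k l X = (\<lambda>mu. \<Sum>lam\<in>{lam\<in>ydiag k l. bar_diag k l lam = mu}. X lam)"

end

theory Submission
  imports Defs "HOL-Computational_Algebra.Polynomial_FPS"
begin

definition altg :: "nat \<Rightarrow> (nat \<Rightarrow> nat \<Rightarrow> 'a::comm_ring_1) \<Rightarrow> 'a" where
  "altg l f = (\<Sum>\<sigma> | \<sigma> permutes {..<l}. of_int (sign \<sigma>) * (\<Prod>a<l. f a (\<sigma> a)))"

lemma permutes_lt: "\<sigma> permutes {..<l} \<Longrightarrow> a < l \<Longrightarrow> \<sigma> a < l"
  using permutes_in_image by fastforce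

lemma altg_cong:
  assumes "\<And>a b. a < l \<Longrightarrow> b < l \<Longrightarrow> f a b = g a b"
  shows "altg l f = altg l g"
  unfolding altg_def
  by (intro sum.cong refl arg_cong2[where f="(*)"] prod.cong) (auto simp: assms permutes_lt)

lemma altg_colscale:
  "(\<Prod>b<l. c b) * altg l f = altg l (\<lambda>a b. c b * f a b)"
proof -
  have "(\<Prod>b<l. c b) * altg l f
      = (\<Sum>\<sigma> | \<sigma> permutes {..<l}. of_int (sign \<sigma>) * ((\<Prod>b<l. c b) * (\<Prod>a<l. f a (\<sigma> a))))"
    unfolding altg_def by (simp add: sum_distrib_left algebra_simps)
  also have "\<dots> = (\<Sum>\<sigma> | \<sigma> permutes {..<l}. of_int (sign \<sigma>) * (\<Prod>a<l. c (\<sigma> a) * f a (\<sigma> a)))"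
  proof (intro sum.cong refl)
    fix \<sigma> assume "\<sigma> \<in> {\<sigma>. \<sigma> permutes {..<l}}"
    then have p: "\<sigma> permutes {..<l}" by simp
    have "(\<Prod>b<l. c b) = (\<Prod>a<l. c (\<sigma> a))"
      using prod.permute[OF p, of c] by (simp add: o_def)
    then show "of_int (sign \<sigma>) * ((\<Prod>b<l. c b) * (\<Prod>a<l. f a (\<sigma> a))) =
          of_int (sign \<sigma>) * (\<Prod>a<l. c (\<sigma> a) * f a (\<sigma> a))"
      by (simp add: prod.distrib)
  qed
  finally show ?thesis unfolding altg_def .
qed

lemma altg_rowscale:
  "altg l (\<lambda>a b. d a * f a b) = (\<Prod>a<l. d a) * altg l f"
  unfolding altg_def by (simp add: prod.distrib sum_distrib_left algebra_simps)

lemma altg_rowperm: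
  assumes r: "\<rho> permutes {..<l}"
  shows "altg l (\<lambda>a b. f (\<rho> a) b) = of_int (sign \<rho>) * altg l f"
proof -
  have ri: "inv \<rho> permutes {..<l}" using r by (rule permutes_inv)
  have "altg l (\<lambda>a b. f (\<rho> a) b)
     = (\<Sum>\<sigma> | \<sigma> permutes {..<l}. of_int (sign \<sigma>) * (\<Prod>a<l. f a (\<sigma> (inv \<rho> a))))"
    unfolding altg_def
  proof (intro sum.cong refl)
    fix \<sigma> assume "\<sigma> \<in> {\<sigma>. \<sigma> permutes {..<l}}"
    have "(\<Prod>a<l. f (\<rho> a) (\<sigma> a)) = (\<Prod>a<l. f (\<rho> (inv \<rho> a)) (\<sigma> (inv \<rho> a)))"
      using prod.permute[OF ri, of "\<lambda>a. f (\<rho> a) (\<sigma> a)"] by (simp add: o_def)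
    also have "\<dots> = (\<Prod>a<l. f a (\<sigma> (inv \<rho> a)))"
      using permutes_inverses(1)[OF r] by simp
    finally show "of_int (sign \<sigma>) * (\<Prod>a<l. f (\<rho> a) (\<sigma> a)) =
         of_int (sign \<sigma>) * (\<Prod>a<l. f a (\<sigma> (inv \<rho> a)))" by simp
  qed
  also have "\<dots> = (\<Sum>\<sigma> | \<sigma> permutes {..<l}. of_int (sign (\<sigma> \<circ> \<rho>)) * (\<Prod>a<l. f a ((\<sigma> \<circ> \<rho>) (inv \<rho> a))))"
    by (rule sum_permutations_compose_right[OF r])
  also have "\<dots> = (\<Sum>\<sigma> | \<sigma> permutes {..<l}. of_int (sign \<rho>) * (of_int (sign \<sigma>) * (\<Prod>a<l. f a (\<sigma> a))))"
  proof (intro sum.cong refl)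
    fix \<sigma> assume "\<sigma> \<in> {\<sigma>. \<sigma> permutes {..<l}}"
    then have p: "\<sigma> permutes {..<l}" by simp
    have "sign (\<sigma> \<circ> \<rho>) = sign \<sigma> * sign \<rho>"
      by (rule sign_compose) (use p r in \<open>auto intro: permutes_imp_permutation\<close>)
    moreover have "\<And>a. (\<sigma> \<circ> \<rho>) (inv \<rho> a) = \<sigma> a"
      using permutes_inverses(1)[OF r] by simp
    ultimately show "of_int (sign (\<sigma> \<circ> \<rho>)) * (\<Prod>a<l. f a ((\<sigma> \<circ> \<rho>) (inv \<rho> a))) =
         of_int (sign \<rho>) * (of_int (sign \<sigma>) * (\<Prod>a<l. f a (\<sigma> a)))" by simp
  qed
  also have "\<dots> = of_int (sign \<rho>) * altg l f"
    unfolding altg_def by (simp add: sum_distrib_left)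
  finally show ?thesis .
qed

lemma altg_eqrows:
  fixes f :: "nat \<Rightarrow> nat \<Rightarrow> 'a::{idom,ring_char_0}"
  assumes "a < l" "a' < l" "a \<noteq> a'" "\<And>b. b < l \<Longrightarrow> f a b = f a' b"
  shows "altg l f = 0"
proof -
  let ?t = "Transposition.transpose a a'"
  have tp: "?t permutes {..<l}" using assms by (intro permutes_swap_id) auto
  have "altg l (\<lambda>x b. f (?t x) b) = altg l f"
  proof (rule altg_cong)
    fix x b assume "x < l" "b < l"
    show "f (?t x) b = f x b"
      using assms(4)[OF \<open>b < l\<close>] by (cases "x = a"; cases "x = a'") (auto simp: transpose_def)
  qed
  moreover have "altg l (\<lambda>x b. f (?t x) b) = - altg l f"
    using altg_rowperm[OF tp, of f] assms by (simp add: sign_swap_id)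
  ultimately have "2 * altg l f = 0" by simp
  then show ?thesis by simp
qed

lemma altg_multilinear:
  assumes "\<And>a. finite (J a)"
  shows "altg l (\<lambda>a b. \<Sum>j\<in>J a. F a j b) = (\<Sum>\<beta>\<in>PiE {..<l} J. altg l (\<lambda>a b. F a (\<beta> a) b))"
proof -
  have "altg l (\<lambda>a b. \<Sum>j\<in>J a. F a j b)
     = (\<Sum>\<sigma> | \<sigma> permutes {..<l}. of_int (sign \<sigma>) * (\<Sum>\<beta>\<in>PiE {..<l} J. \<Prod>a<l. F a (\<beta> a) (\<sigma> a)))"
    unfolding altg_def by (subst prod_sum_PiE) (auto simp: assms)
  also have "\<dots> = (\<Sum>\<beta>\<in>PiE {..<l} J. altg l (\<lambda>a b. F a (\<beta> a) b))"
    unfolding altg_def sum_distrib_left by (rule sum.swap)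
  finally show ?thesis .
qed

definition cyc :: "nat \<Rightarrow> nat \<Rightarrow> nat" where
  "cyc l a = (if a = 0 then l - 1 else if a < l then a - 1 else a)"

lemma cyc_permutes: "1 \<le> l \<Longrightarrow> cyc l permutes {..<l}"
proof -
  assume l: "1 \<le> l"
  have "bij_betw (cyc l) {..<l} {..<l}"
  proof (rule bij_betw_byWitness[where f'="\<lambda>a. if a = l - 1 then 0 else a + 1"])
    show "\<forall>a\<in>{..<l}. (if cyc l a = l - 1 then 0 else cyc l a + 1) = a"
      using l by (auto simp: cyc_def)
    show "\<forall>a\<in>{..<l}. cyc l (if a = l - 1 then 0 else a + 1) = a"
      using l by (auto simp: cyc_def)
  qed (use l in \<open>auto simp: cyc_def\<close>)
  moreover have "\<And>x. x \<notin> {..<l} \<Longrightarrow> cyc l x = x" using l by (auto simp: cyc_def)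
  ultimately show ?thesis by (rule bij_imp_permutes)
qed

lemma cyc_Suc: "1 \<le> l \<Longrightarrow> cyc (Suc l) = Transposition.transpose (l - 1) l \<circ> cyc l"
  by (rule ext) (auto simp: cyc_def transpose_def less_Suc_eq)

lemma sign_cyc: "1 \<le> l \<Longrightarrow> sign (cyc l) = (-1) ^ (l - 1)"
proof (induction l rule: dec_induct)
  case base
  have "cyc 1 = id" by (rule ext) (auto simp: cyc_def)
  then show ?case by simp
next
  case (step l)
  have "sign (cyc (Suc l)) = sign (Transposition.transpose (l - 1) l) * sign (cyc l)"
    unfolding cyc_Suc[OF step(1)]
    by (rule sign_compose) (use cyc_permutes[OF step(1)] in \<open>auto intro: permutes_imp_permutation permutation_swap_id\<close>)
  also have "\<dots> = - ((-1) ^ (l - 1))" using step by (simp add: sign_swap_id)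
  also have "\<dots> = (-1) ^ (Suc l - 1)" using step(1) by (cases l) auto
  finally show ?case .
qed

definition alt :: "nat \<Rightarrow> (nat \<Rightarrow> complex) \<Rightarrow> (nat \<Rightarrow> nat) \<Rightarrow> complex" where
  "alt l \<zeta> p = altg l (\<lambda>a b. \<zeta> b ^ p a)"

lemma prod_monom:
  fixes l :: nat and c :: "nat \<Rightarrow> 'a::comm_semiring_1"
  shows "(\<Prod>a<l. monom (c a) (d a)) = monom (\<Prod>a<l. c a) (\<Sum>a<l. d a)"
  by (induction l) (simp_all add: mult_monom monom_0 one_pCons)

lemma altg_monom:
  "altg l (\<lambda>a b. monom (f a b) (d a)) = monom (altg l f) (\<Sum>a<l. d a)"
  unfolding altg_def prod_monom
  by (simp add: monom_sum of_int_monom mult_monom)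

lemma row_telescope:
  fixes z :: "'a::comm_ring_1"
  shows "[:1, -z:] * (\<Sum>j<g. monom (z ^ (m + j)) j) = monom (z ^ m) 0 - monom (z ^ (m + g)) g"
proof (induction g)
  case 0 then show ?case by simp
next
  case (Suc g)
  have e: "[:1, -z:] = monom 1 0 - monom z 1" by (simp add: monom_0 monom_Suc)
  have "[:1, -z:] * monom (z ^ (m + g)) g = monom (z ^ (m + g)) g - monom (z ^ (m + Suc g)) (Suc g)"
    unfolding e by (simp add: algebra_simps mult_monom)
  then show ?case by (simp only: sum.lessThan_Suc distrib_left Suc.IH) (simp add: algebra_simps)
qed

lemma cyc_walk:
  assumes "\<And>a. a < l \<Longrightarrow> \<beta> a = (1::nat) \<Longrightarrow> \<beta> (cyc l a) = 1" "a0 < l" "\<beta> a0 = 1"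
  shows "j \<le> a0 \<Longrightarrow> \<beta> (a0 - j) = 1"
proof (induction j)
  case 0 then show ?case using assms by simp
next
  case (Suc j)
  then have "\<beta> (cyc l (a0 - j)) = 1" using assms by auto
  moreover have "cyc l (a0 - j) = a0 - Suc j" using Suc assms(2) by (auto simp: cyc_def)
  ultimately show ?case by simp
qed

lemma cyc_exists:
  assumes l: "1 \<le> l" and b: "\<beta> \<in> PiE {..<l} (\<lambda>_. {..<2::nat})"
    and n0: "\<beta> \<noteq> (\<lambda>a\<in>{..<l}. 0)" and n1: "\<beta> \<noteq> (\<lambda>a\<in>{..<l}. 1)"
  shows "\<exists>a<l. \<beta> a = 1 \<and> \<beta> (cyc l a) = 0"
proof (rule ccontr)
  assume nt: "\<not> ?thesis"
  have lt2: "\<And>a. a < l \<Longrightarrow> \<beta> a < 2" using PiE_mem[OF b] by blast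
  have out: "\<And>a. \<not> a < l \<Longrightarrow> \<beta> a = undefined" by (rule PiE_arb[OF b]) simp
  have H: "\<And>a. a < l \<Longrightarrow> \<beta> a = 1 \<Longrightarrow> \<beta> (cyc l a) = 1"
  proof -
    fix a assume a: "a < l" "\<beta> a = 1"
    have "cyc l a < l" using permutes_lt[OF cyc_permutes[OF l] a(1)] .
    then have "\<beta> (cyc l a) < 2" by (rule lt2)
    moreover have "\<beta> (cyc l a) \<noteq> 0"
    proof
      assume "\<beta> (cyc l a) = 0"
      then have "a < l \<and> \<beta> a = 1 \<and> \<beta> (cyc l a) = 0" using a by simp
      then have "\<exists>a<l. \<beta> a = 1 \<and> \<beta> (cyc l a) = 0" by (rule exI[where x=a])
      with nt show False by (rule notE)
    qed
    ultimately show "\<beta> (cyc l a) = 1" by linarith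
  qed
  have "\<exists>a<l. \<beta> a \<noteq> 0"
  proof (rule ccontr)
    assume z: "\<not> (\<exists>a<l. \<beta> a \<noteq> 0)"
    have "\<beta> = (\<lambda>a\<in>{..<l}. 0)"
    proof (rule ext)
      fix a show "\<beta> a = (\<lambda>a\<in>{..<l}. 0) a"
        using z out[of a] by (cases "a < l") simp_all
    qed
    with n0 show False by blast
  qed
  then obtain a1 where a1: "a1 < l" "\<beta> a1 \<noteq> 0" by blast
  have a11: "\<beta> a1 = 1" using lt2[OF a1(1)] a1(2) by linarith
  have "\<beta> (a1 - a1) = 1" by (rule cyc_walk[OF H a1(1) a11]) simp_all
  then have b0: "\<beta> 0 = 1" by simp
  have "cyc l 0 = l - 1" by (simp add: cyc_def)
  then have bl: "\<beta> (l - 1) = 1" using H[of 0] l b0 by simp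
  have all: "\<And>j. j \<le> l - 1 \<Longrightarrow> \<beta> (l - 1 - j) = 1"
  proof -
    have l1: "l - 1 < l" using l by arith
    fix j assume "j \<le> l - 1"
    then show "\<beta> (l - 1 - j) = 1" using cyc_walk[OF H l1 bl] by metis
  qed
  have "\<beta> = (\<lambda>a\<in>{..<l}. 1)"
  proof (rule ext)
    fix a show "\<beta> a = (\<lambda>a\<in>{..<l}. 1) a"
    proof (cases "a < l")
      case True
      then have "\<beta> (l - 1 - (l - 1 - a)) = 1" by (intro all) simp
      with True show ?thesis by simp
    next
      case False then show ?thesis using out[of a] by simp
    qed
  qed
  with n1 show False by blast
qed

lemma altg_cyc_expand:
  fixes U :: "nat \<Rightarrow> nat \<Rightarrow> 'a::{idom,ring_char_0}"
  assumes l: "1 \<le> l"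
  shows "altg l (\<lambda>a b. U a b - c a * U (cyc l a) b)
       = altg l U + (\<Prod>a<l. - c a) * of_int (sign (cyc l)) * altg l U"
proof -
  define F where "F a (j::nat) b = (if j = 0 then U a b else - c a * U (cyc l a) b)" for a j b
  define S where "S = PiE {..<l} (\<lambda>_. {..<2::nat})"
  define T where "T \<beta> = altg l (\<lambda>a b. F a (\<beta> a) b)" for \<beta>
  define \<beta>0 where "\<beta>0 = (\<lambda>a\<in>{..<l}. 0::nat)"
  define \<beta>1 where "\<beta>1 = (\<lambda>a\<in>{..<l}. 1::nat)"
  have "altg l (\<lambda>a b. U a b - c a * U (cyc l a) b) = altg l (\<lambda>a b. \<Sum>j<2. F a j b)"
    by (rule altg_cong) (simp add: F_def numeral_2_eq_2)
  also have "\<dots> = sum T S"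
    unfolding T_def S_def by (rule altg_multilinear) (rule finite_lessThan)
  also have "\<dots> = sum T (S - {\<beta>0, \<beta>1}) + sum T {\<beta>0, \<beta>1}"
  proof (rule sum.subset_diff)
    have "\<beta>0 \<in> S" unfolding S_def \<beta>0_def by (rule iffD2[OF restrict_PiE]) simp
    moreover have "\<beta>1 \<in> S" unfolding S_def \<beta>1_def by (rule iffD2[OF restrict_PiE]) simp
    ultimately show "{\<beta>0, \<beta>1} \<subseteq> S" by blast
    show "finite S" unfolding S_def by (rule finite_PiE) simp_all
  qed
  also have "sum T (S - {\<beta>0, \<beta>1}) = 0"
  proof (rule sum.neutral, rule ballI)
    fix \<beta> assume \<beta>: "\<beta> \<in> S - {\<beta>0, \<beta>1}"
    have "\<exists>a<l. \<beta> a = 1 \<and> \<beta> (cyc l a) = 0"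
      using cyc_exists[OF l, of \<beta>, folded \<beta>0_def \<beta>1_def] \<beta> unfolding S_def by blast
    then obtain a where a: "a < l" "\<beta> a = 1" "\<beta> (cyc l a) = 0" by blast
    have v: "\<And>a. a < l \<Longrightarrow> \<beta> a = 0 \<or> \<beta> a = 1"
    proof -
      fix a assume "a < l"
      then have "\<beta> a < 2" using PiE_mem[of \<beta> "{..<l}" "\<lambda>_. {..<2::nat}" a] \<beta> unfolding S_def by blast
      then show "\<beta> a = 0 \<or> \<beta> a = 1" by linarith
    qed
    define \<rho> where "\<rho> a = (if \<beta> a = 0 then a else cyc l a)" for a
    have "T \<beta> = altg l (\<lambda>a b. (if \<beta> a = 0 then 1 else - c a) * U (\<rho> a) b)"
      unfolding T_def
    proof (rule altg_cong)
      fix x b assume "x < l" "b < l"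
      then show "F x (\<beta> x) b = (if \<beta> x = 0 then 1 else - c x) * U (\<rho> x) b"
        using v[of x] by (auto simp: F_def \<rho>_def)
    qed
    also have "\<dots> = (\<Prod>a<l. if \<beta> a = 0 then 1 else - c a) * altg l (\<lambda>a b. U (\<rho> a) b)"
      by (rule altg_rowscale)
    also have "altg l (\<lambda>a b. U (\<rho> a) b) = 0"
    proof (rule altg_eqrows)
      show "a < l" by fact
      show "cyc l a < l" using permutes_lt[OF cyc_permutes[OF l] a(1)] .
      show "a \<noteq> cyc l a" using a by auto
      show "\<And>b. b < l \<Longrightarrow> U (\<rho> a) b = U (\<rho> (cyc l a)) b" using a by (simp add: \<rho>_def)
    qed
    finally show "T \<beta> = 0" by simp
  qed
  also have "sum T {\<beta>0, \<beta>1} = T \<beta>0 + T \<beta>1"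
  proof -
    have "\<beta>0 0 \<noteq> \<beta>1 0" using l unfolding \<beta>0_def \<beta>1_def by simp
    then have "\<beta>0 \<noteq> \<beta>1" by metis
    then show ?thesis by simp
  qed
  also have "T \<beta>0 = altg l U"
    unfolding T_def by (rule altg_cong) (simp add: F_def \<beta>0_def)
  also have "T \<beta>1 = altg l (\<lambda>a b. (- c a) * U (cyc l a) b)"
    unfolding T_def by (rule altg_cong) (simp add: F_def \<beta>1_def)
  also have "\<dots> = (\<Prod>a<l. - c a) * altg l (\<lambda>a b. U (cyc l a) b)"
    by (rule altg_rowscale)
  also have "altg l (\<lambda>a b. U (cyc l a) b) = of_int (sign (cyc l)) * altg l U"
    by (rule altg_rowperm[OF cyc_permutes[OF l]])
  finally show ?thesis by (simp add: algebra_simps)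
qed

definition gap :: "nat \<Rightarrow> nat \<Rightarrow> (nat \<Rightarrow> nat) \<Rightarrow> nat \<Rightarrow> nat" where
  "gap l n q a = (if a = 0 then q (l - 1) + n - q 0 else q (a - 1) - q a)"

definition yv :: "nat \<Rightarrow> (nat \<Rightarrow> complex) \<Rightarrow> nat \<Rightarrow> complex" where
  "yv l \<zeta> e = fps_nth (inverse (fps_of_poly (\<Prod>b<l. [:1, - \<zeta> b:]))) e"

lemma dec_mono:
  assumes hq: "\<And>a. Suc a < l \<Longrightarrow> q (Suc a) < q a"
  shows "j < l \<Longrightarrow> i \<le> j \<Longrightarrow> q j \<le> (q i :: nat)"
proof (induction j)
  case 0 then show ?case by simp
next
  case (Suc j)
  show ?case
  proof (cases "i = Suc j")
    case True then show ?thesis by simp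
  next
    case False
    then have "q j \<le> q i" using Suc by simp
    moreover have "q (Suc j) < q j" using hq Suc by simp
    ultimately show ?thesis by simp
  qed
qed

lemma gap_sum:
  assumes l: "1 \<le> l" and hq: "\<And>a. Suc a < l \<Longrightarrow> q (Suc a) < q a" and hq0: "q 0 < n + q (l - 1)"
  shows "(\<Sum>a<l. gap l n q a) = n"
proof -
  have *: "1 \<le> j \<Longrightarrow> j \<le> l \<Longrightarrow> (\<Sum>a<j. gap l n q a) = gap l n q 0 + (q 0 - q (j - 1))" for j
  proof (induction j rule: dec_induct)
    case base then show ?case by simp
  next
    case (step j)
    have a: "q j \<le> q (j - 1)" using dec_mono[where q=q and l=l, OF hq, of j "j - 1"] step by simp
    have b: "q (j - 1) \<le> q 0" using dec_mono[where q=q and l=l, OF hq, of "j - 1" 0] step by simp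
    have "(\<Sum>a<Suc j. gap l n q a) = gap l n q 0 + (q 0 - q (j - 1)) + gap l n q j"
      using step by simp
    also have "gap l n q j = q (j - 1) - q j" using step(1) by (simp add: gap_def)
    finally show ?case using a b by simp
  qed
  have c: "q (l - 1) \<le> q 0" using dec_mono[where q=q and l=l, OF hq, of "l - 1" 0] l by simp
  show ?thesis using *[of l] l c hq0 by (simp add: gap_def)
qed

lemma prod_negc:
  assumes l: "1 \<le> l"
  shows "(\<Prod>a<l. - (if a = 0 then \<epsilon> else 1)) = - \<epsilon> * (-1) ^ (l - 1 :: nat)"
  using l
proof (induction l rule: dec_induct)
  case base then show ?case by simp
next
  case (step l)
  then show ?case by (cases l) (simp_all add: algebra_simps)
qed

lemma box_poly:
  fixes \<zeta> :: "nat \<Rightarrow> complex" and q :: "nat \<Rightarrow> nat"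
  assumes l: "1 \<le> l" and hz: "\<And>b. b < l \<Longrightarrow> \<zeta> b ^ n = \<epsilon>"
    and hq: "\<And>a. Suc a < l \<Longrightarrow> q (Suc a) < q a" and hq0: "q 0 < n + q (l - 1)"
  shows "(\<Prod>b<l. [:1, - \<zeta> b:]) *
      (\<Sum>\<beta>\<in>PiE {..<l} (\<lambda>a. {..<gap l n q a}). monom (alt l \<zeta> (\<lambda>a. q a + \<beta> a)) (\<Sum>a<l. \<beta> a))
    = smult (alt l \<zeta> q) (1 - monom \<epsilon> n)"
proof -
  define U where "U a b = monom (\<zeta> b ^ q a) 0" for a b
  define c where "c a = monom (if a = 0 then \<epsilon> else 1) (gap l n q a)" for a
  have "(\<Sum>\<beta>\<in>PiE {..<l} (\<lambda>a. {..<gap l n q a}). monom (alt l \<zeta> (\<lambda>a. q a + \<beta> a)) (\<Sum>a<l. \<beta> a))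
      = (\<Sum>\<beta>\<in>PiE {..<l} (\<lambda>a. {..<gap l n q a}). altg l (\<lambda>a b. monom (\<zeta> b ^ (q a + \<beta> a)) (\<beta> a)))"
    by (intro sum.cong refl) (simp add: altg_monom alt_def)
  also have "\<dots> = altg l (\<lambda>a b. \<Sum>j<gap l n q a. monom (\<zeta> b ^ (q a + j)) j)"
    by (rule altg_multilinear[symmetric]) simp
  finally have 1: "(\<Sum>\<beta>\<in>PiE {..<l} (\<lambda>a. {..<gap l n q a}). monom (alt l \<zeta> (\<lambda>a. q a + \<beta> a)) (\<Sum>a<l. \<beta> a))
      = altg l (\<lambda>a b. \<Sum>j<gap l n q a. monom (\<zeta> b ^ (q a + j)) j)" .
  have 3: "altg l (\<lambda>a b. [:1, - \<zeta> b:] * (\<Sum>j<gap l n q a. monom (\<zeta> b ^ (q a + j)) j))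
      = altg l (\<lambda>a b. U a b - c a * U (cyc l a) b)"
  proof (rule altg_cong)
    fix a b assume a: "a < l" and b: "b < l"
    have "[:1, - \<zeta> b:] * (\<Sum>j<gap l n q a. monom (\<zeta> b ^ (q a + j)) j)
        = monom (\<zeta> b ^ q a) 0 - monom (\<zeta> b ^ (q a + gap l n q a)) (gap l n q a)"
      by (rule row_telescope)
    also have "monom (\<zeta> b ^ (q a + gap l n q a)) (gap l n q a) = c a * U (cyc l a) b"
    proof (cases "a = 0")
      case True
      have "q a + gap l n q a = q (l - 1) + n" using True hq0 by (simp add: gap_def)
      then have "\<zeta> b ^ (q a + gap l n q a) = \<epsilon> * \<zeta> b ^ q (l - 1)"
        using hz[OF b] by (simp add: power_add)
      then show ?thesis using True by (simp add: c_def U_def mult_monom cyc_def)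
    next
      case False
      have "q a \<le> q (a - 1)" using hq[of "a - 1"] a False by simp
      then have "q a + gap l n q a = q (a - 1)" using False by (simp add: gap_def)
      then show ?thesis using False a by (simp add: c_def U_def mult_monom cyc_def)
    qed
    finally show "[:1, - \<zeta> b:] * (\<Sum>j<gap l n q a. monom (\<zeta> b ^ (q a + j)) j)
        = U a b - c a * U (cyc l a) b" by (simp add: U_def)
  qed
  have 5: "altg l U = monom (alt l \<zeta> q) 0"
    unfolding U_def alt_def using altg_monom[of l "\<lambda>a b. \<zeta> b ^ q a" "\<lambda>_. 0"] by simp
  have 6: "(\<Prod>a<l. - c a) = monom (- \<epsilon> * (-1) ^ (l - 1)) n"
  proof -
    have "(\<Prod>a<l. - c a) = (\<Prod>a<l. monom (- (if a = 0 then \<epsilon> else 1)) (gap l n q a))"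
      by (simp add: c_def minus_monom)
    also have "\<dots> = monom (\<Prod>a<l. - (if a = 0 then \<epsilon> else 1)) (\<Sum>a<l. gap l n q a)"
      by (rule prod_monom)
    also have "\<dots> = monom (- \<epsilon> * (-1) ^ (l - 1)) n"
      using prod_negc[OF l, of \<epsilon>] gap_sum[OF l hq hq0] by simp
    finally show ?thesis .
  qed
  have 7: "(of_int (sign (cyc l)) :: complex poly) = (-1) ^ (l - 1)"
    using sign_cyc[OF l] by simp
  have "(\<Prod>b<l. [:1, - \<zeta> b:]) *
      (\<Sum>\<beta>\<in>PiE {..<l} (\<lambda>a. {..<gap l n q a}). monom (alt l \<zeta> (\<lambda>a. q a + \<beta> a)) (\<Sum>a<l. \<beta> a))
    = altg l (\<lambda>a b. [:1, - \<zeta> b:] * (\<Sum>j<gap l n q a. monom (\<zeta> b ^ (q a + j)) j))"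
    unfolding 1 by (rule altg_colscale)
  also have "\<dots> = altg l U + (\<Prod>a<l. - c a) * of_int (sign (cyc l)) * altg l U"
    unfolding 3 by (rule altg_cyc_expand[OF l])
  also have "\<dots> = monom (alt l \<zeta> q) 0 + monom (- \<epsilon> * (-1) ^ (l - 1)) n * (-1) ^ (l - 1) * monom (alt l \<zeta> q) 0"
    unfolding 5 6 7 ..
  also have "\<dots> = monom (alt l \<zeta> q) 0 - monom (\<epsilon> * alt l \<zeta> q) n"
  proof -
    have "((-1) ^ (l - 1) :: complex poly) = monom ((-1) ^ (l - 1)) 0"
    proof -
      have m1: "(-1 :: complex poly) = [:-1:]" by (simp add: one_pCons)
      show ?thesis unfolding m1 poly_const_pow monom_0 ..
    qed
    then have "monom (- \<epsilon> * (-1) ^ (l - 1)) n * (-1) ^ (l - 1) * monom (alt l \<zeta> q) 0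
        = monom (- \<epsilon> * (-1) ^ (l - 1) * (-1) ^ (l - 1) * alt l \<zeta> q) n"
      by (simp add: mult_monom)
    moreover have "- \<epsilon> * (-1) ^ (l - 1) * (-1) ^ (l - 1) * alt l \<zeta> q = - (\<epsilon> * alt l \<zeta> q)"
    proof -
      have "(-1) ^ (l - 1) * (-1) ^ (l - 1) = (1::complex)"
        by (simp add: power_add[symmetric])
      then show ?thesis by (metis mult.assoc mult.commute mult_1 mult_minus_left)
    qed
    ultimately show ?thesis by (simp add: minus_monom)
  qed
  also have "\<dots> = smult (alt l \<zeta> q) (1 - monom \<epsilon> n)"
    by (simp add: smult_monom monom_0 algebra_simps smult_diff_right)
  finally show ?thesis .
qed

lemma box_coeff:
  fixes \<zeta> :: "nat \<Rightarrow> complex" and q :: "nat \<Rightarrow> nat"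
  assumes l: "1 \<le> l" and hz: "\<And>b. b < l \<Longrightarrow> \<zeta> b ^ n = \<epsilon>"
    and hq: "\<And>a. Suc a < l \<Longrightarrow> q (Suc a) < q a" and hq0: "q 0 < n + q (l - 1)"
    and e: "e < n"
  shows "(\<Sum>\<beta>\<in>{\<beta>\<in>PiE {..<l} (\<lambda>a. {..<gap l n q a}). (\<Sum>a<l. \<beta> a) = e}. alt l \<zeta> (\<lambda>a. q a + \<beta> a))
       = yv l \<zeta> e * alt l \<zeta> q"
proof -
  define P where "P = (\<Prod>b<l. [:1, - \<zeta> b:])"
  define L where "L = (\<Sum>\<beta>\<in>PiE {..<l} (\<lambda>a. {..<gap l n q a}). monom (alt l \<zeta> (\<lambda>a. q a + \<beta> a)) (\<Sum>a<l. \<beta> a))"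
  define R where "R = smult (alt l \<zeta> q) (1 - monom \<epsilon> n)"
  have PL: "P * L = R" unfolding P_def L_def R_def by (rule box_poly[OF l hz hq hq0])
  have P0: "fps_nth (fps_of_poly P) 0 = 1"
    by (simp add: P_def poly_0_coeff_0[symmetric] poly_prod)
  have "fps_of_poly L = inverse (fps_of_poly P) * fps_of_poly P * fps_of_poly L"
    using inverse_mult_eq_1[of "fps_of_poly P"] P0 by simp
  also have "\<dots> = inverse (fps_of_poly P) * fps_of_poly R"
    by (simp add: PL[symmetric] fps_of_poly_mult mult.assoc)
  finally have FL: "fps_of_poly L = inverse (fps_of_poly P) * fps_of_poly R" .
  have "coeff L e = (\<Sum>i=0..e. fps_nth (inverse (fps_of_poly P)) i * coeff R (e - i))"
    using arg_cong[OF FL, of "\<lambda>f. fps_nth f e"] by (simp add: fps_mult_nth)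
  also have "\<dots> = (\<Sum>i=0..e. if i = e then fps_nth (inverse (fps_of_poly P)) i * alt l \<zeta> q else 0)"
  proof (intro sum.cong refl)
    fix i assume "i \<in> {0..e}"
    then have "e - i < n" using e by simp
    then show "fps_nth (inverse (fps_of_poly P)) i * coeff R (e - i) =
      (if i = e then fps_nth (inverse (fps_of_poly P)) i * alt l \<zeta> q else 0)"
      using \<open>i \<in> {0..e}\<close> by (auto simp: R_def coeff_monom)
  qed
  also have "\<dots> = yv l \<zeta> e * alt l \<zeta> q" by (simp add: yv_def P_def)
  finally have cL: "coeff L e = yv l \<zeta> e * alt l \<zeta> q" .
  have "coeff L e = (\<Sum>\<beta>\<in>PiE {..<l} (\<lambda>a. {..<gap l n q a}). if (\<Sum>a<l. \<beta> a) = e then alt l \<zeta> (\<lambda>a. q a + \<beta> a) else 0)"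
    unfolding L_def by (simp add: coeff_sum)
  also have "\<dots> = (\<Sum>\<beta>\<in>{\<beta>\<in>PiE {..<l} (\<lambda>a. {..<gap l n q a}). (\<Sum>a<l. \<beta> a) = e}. alt l \<zeta> (\<lambda>a. q a + \<beta> a))"
    by (rule sum.inter_filter[symmetric]) (simp add: finite_PiE)
  finally show ?thesis using cL by simp
qed

definition qv :: "nat \<Rightarrow> nat list \<Rightarrow> nat \<Rightarrow> nat" where
  "qv l L a = L ! a + (l - 1 - a)"

definition part :: "nat \<Rightarrow> (nat \<Rightarrow> nat) \<Rightarrow> nat list" where
  "part l Q = map (\<lambda>a. Q a - (l - 1 - a)) [0..<l]"

definition sdec :: "nat \<Rightarrow> (nat \<Rightarrow> nat) \<Rightarrow> bool" where
  "sdec l Q \<longleftrightarrow> (\<forall>a. Suc a < l \<longrightarrow> Q (Suc a) < Q a)"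

lemma sdec_gap:
  assumes "sdec l Q" "i \<le> j" "j < l"
  shows "Q j + (j - i) \<le> Q i"
  using assms(2,3)
proof (induction j)
  case 0 then show ?case by simp
next
  case (Suc j)
  show ?case
  proof (cases "i = Suc j")
    case True then show ?thesis by simp
  next
    case False
    then have "Q j + (j - i) \<le> Q i" using Suc by simp
    moreover have "Q (Suc j) < Q j" using assms(1) Suc.prems unfolding sdec_def by blast
    ultimately show ?thesis using False Suc.prems by simp
  qed
qed

lemma sdec_lower:
  assumes "sdec l Q" "a < l"
  shows "l - 1 - a \<le> Q a"
  using sdec_gap[OF assms(1), of a "l - 1"] assms(2) by arith

lemma qv_part: "sdec l Q \<Longrightarrow> a < l \<Longrightarrow> qv l (part l Q) a = Q a"
  using sdec_lower[of l Q a] by (simp add: qv_def part_def)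

lemma ydiag_D:
  assumes "L \<in> ydiag k l"
  shows "length L = l" "\<And>i j. i \<le> j \<Longrightarrow> j < l \<Longrightarrow> L ! j \<le> L ! i" "\<And>i. i < l \<Longrightarrow> L ! i \<le> k"
proof -
  show "length L = l" using assms by (simp add: ydiag_def)
  show "\<And>i j. i \<le> j \<Longrightarrow> j < l \<Longrightarrow> L ! j \<le> L ! i"
  proof -
    fix i j assume "i \<le> j" "j < l"
    then show "L ! j \<le> L ! i"
      using assms by (cases "i = j") (auto simp: ydiag_def sorted_wrt_iff_nth_less)
  qed
  show "\<And>i. i < l \<Longrightarrow> L ! i \<le> k"
    using assms by (auto simp: ydiag_def)
qed

lemma part_qv: "L \<in> ydiag k l \<Longrightarrow> part l (qv l L) = L"
  using ydiag_D(1)[of L k l] by (intro nth_equalityI) (auto simp: part_def qv_def)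

lemma qv_sdec:
  assumes "L \<in> ydiag k l" shows "sdec l (qv l L)"
  unfolding sdec_def
proof (intro allI impI)
  fix a assume a: "Suc a < l"
  have "L ! Suc a \<le> L ! a" using ydiag_D(2)[OF assms, of a "Suc a"] a by simp
  then show "qv l L (Suc a) < qv l L a" using a unfolding qv_def by arith
qed

lemma qv_0: "L \<in> ydiag k l \<Longrightarrow> 1 \<le> l \<Longrightarrow> qv l L 0 < k + l"
  using ydiag_D(3)[of L k l 0] by (simp add: qv_def)

lemma qv_bound: "L \<in> ydiag k l \<Longrightarrow> a < l \<Longrightarrow> qv l L a < k + l"
  using ydiag_D(3)[of L k l a] by (simp add: qv_def)

lemma part_ydiag:
  assumes "sdec l Q" "Q 0 < k + l" "1 \<le> l"
  shows "part l Q \<in> ydiag k l"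
proof -
  have le: "Q j + (j - i) \<le> Q i" if "i \<le> j" "j < l" for i j using sdec_gap[OF assms(1) that] .
  have low: "l - 1 - a \<le> Q a" if "a < l" for a using sdec_lower[OF assms(1) that] .
  have "sorted_wrt (\<ge>) (part l Q)"
    unfolding sorted_wrt_iff_nth_less
  proof (intro allI impI)
    fix i j assume "i < j" "j < length (part l Q)"
    then have "j < l" by (simp add: part_def)
    then have "Q j + (j - i) \<le> Q i" using le \<open>i < j\<close> by simp
    then show "part l Q ! j \<le> part l Q ! i"
      using \<open>i < j\<close> \<open>j < l\<close> by (simp add: part_def)
  qed
  moreover have "\<forall>x\<in>set (part l Q). x \<le> k"
  proof
    fix x assume "x \<in> set (part l Q)"
    then obtain a where a: "a < l" "x = Q a - (l - 1 - a)" by (auto simp: part_def)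
    have "Q a + a \<le> Q 0" using le[of 0 a] a by simp
    then show "x \<le> k" using a assms(2) by simp
  qed
  ultimately show ?thesis by (simp add: ydiag_def part_def)
qed

lemma sum_list_qv:
  assumes "L \<in> ydiag k l"
  shows "(\<Sum>a<l. qv l L a) = sum_list L + (\<Sum>a<l. l - 1 - a)"
proof -
  have "sum_list L = (\<Sum>a<l. L ! a)"
    using ydiag_D(1)[OF assms] by (simp add: sum_list_sum_nth atLeast0LessThan)
  then show ?thesis unfolding qv_def sum.distrib by simp
qed

definition pclass :: "nat \<Rightarrow> nat \<Rightarrow> (nat \<Rightarrow> nat) \<Rightarrow> (nat \<Rightarrow> nat) \<Rightarrow> bool" where
  "pclass l e q q' \<longleftrightarrow> (\<Sum>a<l. q' a) = (\<Sum>a<l. q a) + e \<and> (\<forall>j<l. q j \<le> q' j)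
      \<and> (\<forall>j. Suc j < l \<longrightarrow> q' (Suc j) < q j)"

definition pquant :: "nat \<Rightarrow> nat \<Rightarrow> nat \<Rightarrow> (nat \<Rightarrow> nat) \<Rightarrow> (nat \<Rightarrow> nat) \<Rightarrow> bool" where
  "pquant l n e q q' \<longleftrightarrow> (\<Sum>a<l. q' a) + n = (\<Sum>a<l. q a) + e \<and> (\<forall>j<l. q' j < q j)
      \<and> (\<forall>j. Suc j < l \<longrightarrow> q (Suc j) \<le> q' j)"

lemma pieri_q:
  assumes L: "L \<in> ydiag k l" and M: "M \<in> ydiag k l"
  shows "pieri_coeff k l e L M \<longleftrightarrow>
    pclass l e (qv l L) (qv l M) \<or> pquant l (k + l) e (qv l L) (qv l M)"
proof -
  have s1: "(sum_list M = sum_list L + e) \<longleftrightarrow> (\<Sum>a<l. qv l M a) = (\<Sum>a<l. qv l L a) + e"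
    using sum_list_qv[OF L] sum_list_qv[OF M] by simp
  have s2: "(sum_list M + (k + l) = sum_list L + e) \<longleftrightarrow> (\<Sum>a<l. qv l M a) + (k + l) = (\<Sum>a<l. qv l L a) + e"
    using sum_list_qv[OF L] sum_list_qv[OF M] by simp
  have c2: "(\<forall>j<l. L ! j \<le> M ! j) \<longleftrightarrow> (\<forall>j<l. qv l L j \<le> qv l M j)"
    by (simp only: qv_def add_le_cancel_right)
  have c3: "(\<forall>j. j + 1 < l \<longrightarrow> M ! (j + 1) \<le> L ! j) \<longleftrightarrow> (\<forall>j. Suc j < l \<longrightarrow> qv l M (Suc j) < qv l L j)"
    by (auto simp: qv_def)
  have c4: "(\<forall>j<l. M ! j + 1 \<le> L ! j) \<longleftrightarrow> (\<forall>j<l. qv l M j < qv l L j)"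
    by (auto simp: qv_def)
  have c5: "(\<forall>j. j + 1 < l \<longrightarrow> L ! (j + 1) \<le> M ! j + 1) \<longleftrightarrow> (\<forall>j. Suc j < l \<longrightarrow> qv l L (Suc j) \<le> qv l M j)"
    by (auto simp: qv_def)
  show ?thesis
    unfolding pieri_coeff_def pclass_def pquant_def using M s1 s2 c2 c3 c4 c5 by simp
qed

lemma alt_cong: "(\<And>a. a < l \<Longrightarrow> p a = p' a) \<Longrightarrow> alt l \<zeta> p = alt l \<zeta> p'"
  unfolding alt_def by (rule altg_cong) simp

lemma prod_eps: fixes l :: nat shows "1 \<le> l \<Longrightarrow> (\<Prod>a<l. if a = 0 then \<epsilon> else 1) = (\<epsilon>::'a::comm_monoid_mult)"
proof (induction l rule: dec_induct)
  case base then show ?case by simp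
next
  case (step l) then show ?case by simp
qed

lemma alt_rot:
  assumes l: "1 \<le> l" and hz: "\<And>b. b < l \<Longrightarrow> \<zeta> b ^ n = \<epsilon>" and eps: "\<epsilon> = (-1) ^ (l - 1)"
    and p0: "n \<le> p 0"
  shows "alt l \<zeta> p = alt l \<zeta> (\<lambda>a. if Suc a < l then p (Suc a) else p 0 - n)"
proof -
  define R where "R a = (if Suc a < l then p (Suc a) else p 0 - n)" for a
  have "alt l \<zeta> p = altg l (\<lambda>a b. (if a = 0 then \<epsilon> else 1) * \<zeta> b ^ R (cyc l a))"
    unfolding alt_def
  proof (rule altg_cong)
    fix a b assume a: "a < l" and b: "b < l"
    show "\<zeta> b ^ p a = (if a = 0 then \<epsilon> else 1) * \<zeta> b ^ R (cyc l a)"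
    proof (cases "a = 0")
      case True
      have "R (cyc l a) = p 0 - n" using True l by (simp add: R_def cyc_def)
      moreover have "\<zeta> b ^ p 0 = \<zeta> b ^ (p 0 - n) * \<zeta> b ^ n"
        using p0 by (simp add: power_add[symmetric])
      ultimately show ?thesis using True hz[OF b] by simp
    next
      case False
      then have "R (cyc l a) = p a" using a by (simp add: R_def cyc_def)
      then show ?thesis using False by simp
    qed
  qed
  also have "\<dots> = (\<Prod>a<l. if a = 0 then \<epsilon> else 1) * altg l (\<lambda>a b. \<zeta> b ^ R (cyc l a))"
    by (rule altg_rowscale)
  also have "altg l (\<lambda>a b. \<zeta> b ^ R (cyc l a)) = of_int (sign (cyc l)) * alt l \<zeta> R"
    unfolding alt_def by (rule altg_rowperm[OF cyc_permutes[OF l]])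
  also have "(\<Prod>a<l. if a = 0 then \<epsilon> else 1) = \<epsilon>" by (rule prod_eps[OF l])
  finally have "alt l \<zeta> p = \<epsilon> * ((-1) ^ (l - 1) * alt l \<zeta> R)" using sign_cyc[OF l] by simp
  also have "\<dots> = alt l \<zeta> R"
  proof -
    have "(-1) ^ (l - 1) * (-1) ^ (l - 1) = (1::complex)" by (simp add: power_add[symmetric])
    then show ?thesis unfolding eps by (metis mult.assoc mult_1)
  qed
  finally show ?thesis unfolding R_def .
qed

context
  fixes k l :: nat and q :: "nat \<Rightarrow> nat" and e :: nat
  assumes l: "1 \<le> l" and sq: "sdec l q" and q0: "q 0 < k + l"
begin

definition PBox where
  "PBox = {\<beta>\<in>PiE {..<l} (\<lambda>a. {..<gap l (k + l) q a}). (\<Sum>a<l. \<beta> a) = e}"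

lemma PBox_eq: "PBox = {\<beta>\<in>PiE {..<l} (\<lambda>a. {..<gap l (k + l) q a}). (\<Sum>a<l. \<beta> a) = e}"
  by (simp add: PBox_def)

definition Qf :: "(nat \<Rightarrow> nat) \<Rightarrow> nat \<Rightarrow> nat" where
  "Qf \<beta> a = (if q 0 + \<beta> 0 < k + l then q a + \<beta> a
     else if Suc a < l then q (Suc a) + \<beta> (Suc a) else q 0 + \<beta> 0 - (k + l))"

definition Iinv :: "nat list \<Rightarrow> nat \<Rightarrow> nat" where
  "Iinv M = (if (\<Sum>a<l. qv l M a) = (\<Sum>a<l. q a) + e then (\<lambda>a\<in>{..<l}. qv l M a - q a)
     else (\<lambda>a\<in>{..<l}. if a = 0 then qv l M (l - 1) + (k + l) - q 0 else qv l M (a - 1) - q a))"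

lemma box_bounds:
  assumes "\<beta> \<in> PBox"
  shows "q 0 + \<beta> 0 < q (l - 1) + (k + l)" "\<And>a. 1 \<le> a \<Longrightarrow> a < l \<Longrightarrow> q a + \<beta> a < q (a - 1)"
    "(\<Sum>a<l. \<beta> a) = e"
proof -
  have b: "\<And>a. a < l \<Longrightarrow> \<beta> a < gap l (k + l) q a"
    using assms unfolding PBox_def by (auto simp: PiE_iff)
  show "q 0 + \<beta> 0 < q (l - 1) + (k + l)" using b[of 0] l q0 by (simp add: gap_def)
  show "\<And>a. 1 \<le> a \<Longrightarrow> a < l \<Longrightarrow> q a + \<beta> a < q (a - 1)"
  proof -
    fix a assume "1 \<le> a" "a < l"
    then show "q a + \<beta> a < q (a - 1)" using b[of a] by (simp add: gap_def)
  qed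
  show "(\<Sum>a<l. \<beta> a) = e" using assms by (simp add: PBox_def)
qed

lemma sq': "Suc a < l \<Longrightarrow> q (Suc a) < q a" using sq by (simp add: sdec_def)

lemma Qf_class:
  assumes b: "\<beta> \<in> PBox" and c: "q 0 + \<beta> 0 < k + l"
  shows "sdec l (Qf \<beta>)" "Qf \<beta> 0 < k + l" "pclass l e q (Qf \<beta>)"
proof -
  note bb = box_bounds[OF b]
  have Q: "\<And>a. Qf \<beta> a = q a + \<beta> a" using c by (simp add: Qf_def)
  show "sdec l (Qf \<beta>)" unfolding sdec_def Q
  proof (intro allI impI)
    fix a assume "Suc a < l"
    then show "q (Suc a) + \<beta> (Suc a) < q a + \<beta> a" using bb(2)[of "Suc a"] by simp
  qed
  show "Qf \<beta> 0 < k + l" using c Q by simp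
  show "pclass l e q (Qf \<beta>)" unfolding pclass_def Q
  proof (intro conjI allI impI)
    show "(\<Sum>a<l. q a + \<beta> a) = (\<Sum>a<l. q a) + e" using bb(3) by (simp add: sum.distrib)
    fix j
    show "j < l \<Longrightarrow> q j \<le> q j + \<beta> j" by simp
    show "Suc j < l \<Longrightarrow> q (Suc j) + \<beta> (Suc j) < q j" using bb(2)[of "Suc j"] by simp
  qed
qed

lemma Qf_quant:
  assumes b: "\<beta> \<in> PBox" and c: "\<not> q 0 + \<beta> 0 < k + l"
  shows "sdec l (Qf \<beta>)" "Qf \<beta> 0 < k + l" "pquant l (k + l) e q (Qf \<beta>)"
proof -
  note bb = box_bounds[OF b]
  have Q: "\<And>a. Qf \<beta> a = (if Suc a < l then q (Suc a) + \<beta> (Suc a) else q 0 + \<beta> 0 - (k + l))"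
    using c by (simp add: Qf_def)
  have last: "q 0 + \<beta> 0 - (k + l) < q (l - 1)" using bb(1) c by simp
  show "sdec l (Qf \<beta>)" unfolding sdec_def
  proof (intro allI impI)
    fix a assume a: "Suc a < l"
    show "Qf \<beta> (Suc a) < Qf \<beta> a"
    proof (cases "Suc (Suc a) < l")
      case True
      then show ?thesis using bb(2)[of "Suc (Suc a)"] a by (simp add: Q)
    next
      case False
      then have "l - 1 = Suc a" using a by simp
      then show ?thesis using last a False by (simp add: Q)
    qed
  qed
  show "Qf \<beta> 0 < k + l"
  proof (cases "1 < l")
    case True
    then show ?thesis using bb(2)[of 1] q0 by (simp add: Q)
  next
    case False
    then have "l = 1" using l by simp
    moreover have "Qf \<beta> 0 = (if Suc 0 < l then q (Suc 0) + \<beta> (Suc 0) else q 0 + \<beta> 0 - (k + l))" by (rule Q)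
    ultimately show ?thesis using last q0 by simp
  qed
  show "pquant l (k + l) e q (Qf \<beta>)" unfolding pquant_def
  proof (intro conjI allI impI)
    obtain m where m: "l = Suc m" using l by (cases l) auto
    have s1: "(\<Sum>a<l. Qf \<beta> a) = (\<Sum>a<m. q (Suc a) + \<beta> (Suc a)) + (q 0 + \<beta> 0 - (k + l))"
    proof -
      have "(\<Sum>a<l. Qf \<beta> a) = (\<Sum>a<m. Qf \<beta> a) + Qf \<beta> m" unfolding m by simp
      moreover have "Qf \<beta> m = q 0 + \<beta> 0 - (k + l)" using Q[of m] m by simp
      moreover have "(\<Sum>a<m. Qf \<beta> a) = (\<Sum>a<m. q (Suc a) + \<beta> (Suc a))"
        by (rule sum.cong) (use Q m in auto)
      ultimately show ?thesis by simp
    qed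
    have s2: "(\<Sum>a<l. q a) = q 0 + (\<Sum>a<m. q (Suc a))" unfolding m by (rule sum.lessThan_Suc_shift)
    have s3: "(\<Sum>a<l. \<beta> a) = \<beta> 0 + (\<Sum>a<m. \<beta> (Suc a))" unfolding m by (rule sum.lessThan_Suc_shift)
    show "(\<Sum>a<l. Qf \<beta> a) + (k + l) = (\<Sum>a<l. q a) + e"
      using s1 s2 s3 bb(3) c by (simp add: sum.distrib)
    fix j
    show "j < l \<Longrightarrow> Qf \<beta> j < q j"
    proof -
      assume j: "j < l"
      show "Qf \<beta> j < q j"
      proof (cases "Suc j < l")
        case True then show ?thesis using bb(2)[of "Suc j"] by (simp add: Q)
      next
        case False then have "j = l - 1" using j by simp
        then show ?thesis using last False by (simp add: Q)
      qed
    qed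
    show "Suc j < l \<Longrightarrow> q (Suc j) \<le> Qf \<beta> j" by (simp add: Q)
  qed
qed


lemma pclass_cong:
  assumes h: "\<And>a. a < l \<Longrightarrow> q1 a = q2 a" shows "pclass l e q q1 = pclass l e q q2"
proof -
  have s: "sum q1 {..<l} = sum q2 {..<l}" using h by (intro sum.cong) auto
  show ?thesis unfolding pclass_def s using h by auto
qed

lemma pquant_cong:
  assumes h: "\<And>a. a < l \<Longrightarrow> q1 a = q2 a" shows "pquant l (k + l) e q q1 = pquant l (k + l) e q q2"
proof -
  have s: "sum q1 {..<l} = sum q2 {..<l}" using h by (intro sum.cong) auto
  show ?thesis unfolding pquant_def s using h by auto
qed

lemma If_class:
  assumes M: "M \<in> ydiag k l" and pc: "pclass l e q (qv l M)"
  shows "Iinv M \<in> PBox" "\<And>a. a < l \<Longrightarrow> Qf (Iinv M) a = qv l M a"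
proof -
  let ?q' = "qv l M"
  have ps: "(\<Sum>a<l. ?q' a) = (\<Sum>a<l. q a) + e" and le: "\<And>j. j < l \<Longrightarrow> q j \<le> ?q' j"
    and lt: "\<And>j. Suc j < l \<Longrightarrow> ?q' (Suc j) < q j"
    using pc unfolding pclass_def by auto
  have bnd: "\<And>a. a < l \<Longrightarrow> ?q' a < k + l" using qv_bound[OF M] by simp
  have IM: "Iinv M = (\<lambda>a\<in>{..<l}. ?q' a - q a)" using ps by (simp add: Iinv_def)
  show "Iinv M \<in> PBox"
    unfolding PBox_def IM
  proof (intro CollectI conjI)
    show "(\<lambda>a\<in>{..<l}. ?q' a - q a) \<in> PiE {..<l} (\<lambda>a. {..<gap l (k + l) q a})"
    proof (rule iffD2[OF restrict_PiE], rule Pi_I)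
      fix a assume "a \<in> {..<l}"
      then have a: "a < l" by simp
      show "?q' a - q a \<in> {..<gap l (k + l) q a}"
      proof (cases "a = 0")
        case True
        then show ?thesis using bnd[OF a] le[OF a] by (simp add: gap_def)
      next
        case False
        then have "?q' a < q (a - 1)" using lt[of "a - 1"] a by simp
        then show ?thesis using False le[OF a] by (simp add: gap_def)
      qed
    qed
    have "(\<Sum>a<l. (\<lambda>a\<in>{..<l}. ?q' a - q a) a) = (\<Sum>a<l. ?q' a - q a)" by simp
    also have "\<dots> = (\<Sum>a<l. ?q' a) - (\<Sum>a<l. q a)"
      by (rule sum_subtractf_nat) (use le in simp)
    also have "\<dots> = e" using ps by simp
    finally show "(\<Sum>a<l. (\<lambda>a\<in>{..<l}. ?q' a - q a) a) = e" .
  qed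
  show "\<And>a. a < l \<Longrightarrow> Qf (Iinv M) a = qv l M a"
  proof -
    fix a assume a: "a < l"
    have "q 0 + (Iinv M) 0 < k + l" using IM le[of 0] bnd[of 0] l by simp
    then show "Qf (Iinv M) a = qv l M a" using IM a le[OF a] by (simp add: Qf_def)
  qed
qed

lemma If_quant:
  assumes M: "M \<in> ydiag k l" and pq: "pquant l (k + l) e q (qv l M)"
  shows "Iinv M \<in> PBox" "\<And>a. a < l \<Longrightarrow> Qf (Iinv M) a = qv l M a"
proof -
  let ?q' = "qv l M"
  have ps: "(\<Sum>a<l. ?q' a) + (k + l) = (\<Sum>a<l. q a) + e" and lt: "\<And>j. j < l \<Longrightarrow> ?q' j < q j"
    and le: "\<And>j. Suc j < l \<Longrightarrow> q (Suc j) \<le> ?q' j"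
    using pq unfolding pquant_def by auto
  have ne: "(\<Sum>a<l. ?q' a) \<noteq> (\<Sum>a<l. q a) + e" using ps l by simp
  define \<beta> where "\<beta> = (\<lambda>a\<in>{..<l}. if a = 0 then ?q' (l - 1) + (k + l) - q 0 else ?q' (a - 1) - q a)"
  have IM: "Iinv M = \<beta>" using ne by (simp add: Iinv_def \<beta>_def)
  obtain m where m: "l = Suc m" using l by (cases l) auto
  show "Iinv M \<in> PBox"
    unfolding PBox_def IM
  proof (intro CollectI conjI)
    show "\<beta> \<in> PiE {..<l} (\<lambda>a. {..<gap l (k + l) q a})"
      unfolding \<beta>_def
    proof (rule iffD2[OF restrict_PiE], rule Pi_I)
      fix a assume "a \<in> {..<l}"
      then have a: "a < l" by simp
      show "(if a = 0 then ?q' (l - 1) + (k + l) - q 0 else ?q' (a - 1) - q a) \<in> {..<gap l (k + l) q a}"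
      proof (cases "a = 0")
        case True
        have "?q' (l - 1) < q (l - 1)" using lt[of "l - 1"] l by simp
        then show ?thesis using True q0 by (simp add: gap_def)
      next
        case False
        have "?q' (a - 1) < q (a - 1)" using lt[of "a - 1"] a by simp
        moreover have "q a \<le> ?q' (a - 1)" using le[of "a - 1"] a False by simp
        ultimately show ?thesis using False by (simp add: gap_def)
      qed
    qed
    have s3: "(\<Sum>a<l. \<beta> a) = \<beta> 0 + (\<Sum>a<m. \<beta> (Suc a))" unfolding m by (rule sum.lessThan_Suc_shift)
    have b0: "\<beta> 0 = ?q' m + (k + l) - q 0" using m by (simp add: \<beta>_def)
    have bs: "(\<Sum>a<m. \<beta> (Suc a)) = (\<Sum>a<m. ?q' a - q (Suc a))"
      by (rule sum.cong) (use m in \<open>auto simp: \<beta>_def\<close>)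
    have lem: "\<And>a. a \<in> {..<m} \<Longrightarrow> q (Suc a) \<le> ?q' a" using le m by simp
    have bs2: "(\<Sum>a<m. ?q' a - q (Suc a)) = (\<Sum>a<m. ?q' a) - (\<Sum>a<m. q (Suc a))"
      by (rule sum_subtractf_nat) (use lem in simp)
    have bs3: "(\<Sum>a<m. q (Suc a)) \<le> (\<Sum>a<m. ?q' a)" by (rule sum_mono) (use lem in simp)
    have s1: "(\<Sum>a<l. ?q' a) = (\<Sum>a<m. ?q' a) + ?q' m" unfolding m by simp
    have s2: "(\<Sum>a<l. q a) = q 0 + (\<Sum>a<m. q (Suc a))" unfolding m by (rule sum.lessThan_Suc_shift)
    show "(\<Sum>a<l. \<beta> a) = e"
      using s3 b0 bs bs2 bs3 s1 s2 ps q0 by linarith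
  qed
  show "\<And>a. a < l \<Longrightarrow> Qf (Iinv M) a = qv l M a"
  proof -
    fix a assume a: "a < l"
    have b0: "\<beta> 0 = ?q' (l - 1) + (k + l) - q 0" using l by (simp add: \<beta>_def)
    then have nc: "\<not> q 0 + \<beta> 0 < k + l" using q0 by simp
    show "Qf (Iinv M) a = qv l M a"
    proof (cases "Suc a < l")
      case True
      have "\<beta> (Suc a) = ?q' a - q (Suc a)" using True by (simp add: \<beta>_def)
      then show ?thesis using nc True le[OF True] by (simp add: Qf_def IM)
    next
      case False
      then have "a = l - 1" using a by simp
      then show ?thesis using nc False b0 q0 by (simp add: Qf_def IM)
    qed
  qed
qed

lemma bij_sum:
  assumes hz: "\<And>b. b < l \<Longrightarrow> \<zeta> b ^ (k + l) = \<epsilon>" and eps: "\<epsilon> = (-1) ^ (l - 1)"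
  shows "(\<Sum>\<beta>\<in>PBox. alt l \<zeta> (\<lambda>a. q a + \<beta> a))
    = (\<Sum>M\<in>{M\<in>ydiag k l. pclass l e q (qv l M) \<or> pquant l (k + l) e q (qv l M)}. alt l \<zeta> (qv l M))"
proof (rule sum.reindex_bij_witness[where i = Iinv and j = "\<lambda>\<beta>. part l (Qf \<beta>)"])
  fix \<beta> assume b: "\<beta> \<in> PBox"
  have pe: "\<beta> \<in> PiE {..<l} (\<lambda>a. {..<gap l (k + l) q a})" using b by (simp add: PBox_def)
  let ?M = "part l (Qf \<beta>)"
  have props: "sdec l (Qf \<beta>) \<and> Qf \<beta> 0 < k + l \<and>
      (if q 0 + \<beta> 0 < k + l then pclass l e q (Qf \<beta>) else pquant l (k + l) e q (Qf \<beta>))"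
    using Qf_class[OF b] Qf_quant[OF b] by (cases "q 0 + \<beta> 0 < k + l") auto
  have qvM: "\<And>a. a < l \<Longrightarrow> qv l ?M a = Qf \<beta> a" using qv_part props by blast
  have sumM: "(\<Sum>a<l. qv l ?M a) = (\<Sum>a<l. Qf \<beta> a)" by (rule sum.cong) (simp_all add: qvM)
  show "Iinv ?M = \<beta>"
  proof (cases "q 0 + \<beta> 0 < k + l")
    case True
    then have pc: "pclass l e q (Qf \<beta>)" using props by simp
    then have "(\<Sum>a<l. qv l ?M a) = (\<Sum>a<l. q a) + e" unfolding sumM pclass_def by simp
    then have "Iinv ?M = (\<lambda>a\<in>{..<l}. qv l ?M a - q a)" by (simp add: Iinv_def)
    also have "\<dots> = (\<lambda>a\<in>{..<l}. \<beta> a)"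
      by (rule restrict_ext) (simp add: qvM Qf_def True)
    also have "\<dots> = \<beta>" using pe by (rule PiE_restrict)
    finally show ?thesis .
  next
    case False
    then have pq: "pquant l (k + l) e q (Qf \<beta>)" using props by simp
    then have "(\<Sum>a<l. qv l ?M a) \<noteq> (\<Sum>a<l. q a) + e" unfolding sumM pquant_def using l by simp
    then have "Iinv ?M = (\<lambda>a\<in>{..<l}. if a = 0 then qv l ?M (l - 1) + (k + l) - q 0 else qv l ?M (a - 1) - q a)"
      by (simp add: Iinv_def)
    also have "\<dots> = (\<lambda>a\<in>{..<l}. \<beta> a)"
    proof (rule restrict_ext)
      fix a assume "a \<in> {..<l}"
      then have a: "a < l" by simp
      show "(if a = 0 then qv l ?M (l - 1) + (k + l) - q 0 else qv l ?M (a - 1) - q a) = \<beta> a"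
      proof (cases "a = 0")
        case True
        have "qv l ?M (l - 1) = q 0 + \<beta> 0 - (k + l)" using qvM[of "l - 1"] l False by (simp add: Qf_def)
        then show ?thesis using True False by simp
      next
        case c: False
        have "qv l ?M (a - 1) = q a + \<beta> a" using qvM[of "a - 1"] a c False by (simp add: Qf_def)
        then show ?thesis using c by simp
      qed
    qed
    also have "\<dots> = \<beta>" using pe by (rule PiE_restrict)
    finally show ?thesis .
  qed
  show "?M \<in> {M\<in>ydiag k l. pclass l e q (qv l M) \<or> pquant l (k + l) e q (qv l M)}"
  proof (intro CollectI conjI)
    show "?M \<in> ydiag k l" using props l by (intro part_ydiag) auto
    show "pclass l e q (qv l ?M) \<or> pquant l (k + l) e q (qv l ?M)"
      using props pclass_cong[of "qv l ?M" "Qf \<beta>"] pquant_cong[of "qv l ?M" "Qf \<beta>"] qvM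
      by (cases "q 0 + \<beta> 0 < k + l") auto
  qed
  show "alt l \<zeta> (qv l ?M) = alt l \<zeta> (\<lambda>a. q a + \<beta> a)"
  proof -
    have "alt l \<zeta> (qv l ?M) = alt l \<zeta> (Qf \<beta>)" by (rule alt_cong) (rule qvM)
    also have "\<dots> = alt l \<zeta> (\<lambda>a. q a + \<beta> a)"
    proof (cases "q 0 + \<beta> 0 < k + l")
      case True then show ?thesis by (intro alt_cong) (simp add: Qf_def)
    next
      case nc: False
      have "alt l \<zeta> (\<lambda>a. q a + \<beta> a) = alt l \<zeta> (\<lambda>a. if Suc a < l then q (Suc a) + \<beta> (Suc a) else q 0 + \<beta> 0 - (k + l))"
      proof -
        have nle: "k + l \<le> q 0 + \<beta> 0" using nc by linarith
        show ?thesis using alt_rot[where p="\<lambda>a. q a + \<beta> a" and \<zeta>=\<zeta>, OF l hz eps] nle by simp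
      qed
      also have "\<dots> = alt l \<zeta> (Qf \<beta>)" by (intro alt_cong) (simp add: Qf_def nc)
      finally show ?thesis by simp
    qed
    finally show ?thesis .
  qed
next
  fix M assume "M \<in> {M\<in>ydiag k l. pclass l e q (qv l M) \<or> pquant l (k + l) e q (qv l M)}"
  then have M: "M \<in> ydiag k l" and pp: "pclass l e q (qv l M) \<or> pquant l (k + l) e q (qv l M)" by auto
  have r: "Iinv M \<in> PBox \<and> (\<forall>a<l. Qf (Iinv M) a = qv l M a)"
    using pp If_class[OF M] If_quant[OF M] by blast
  show "Iinv M \<in> PBox" using r by blast
  have "part l (Qf (Iinv M)) = part l (qv l M)" using r by (simp add: part_def)
  also have "\<dots> = M" by (rule part_qv[OF M])
  finally show "part l (Qf (Iinv M)) = M" .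
qed

end

lemma pieri_alt:
  fixes \<zeta> :: "nat \<Rightarrow> complex"
  assumes l: "1 \<le> l" and L: "L \<in> ydiag k l" and e: "e \<le> k"
    and hz: "\<And>b. b < l \<Longrightarrow> \<zeta> b ^ (k + l) = \<epsilon>" and eps: "\<epsilon> = (-1) ^ (l - 1)"
  shows "(\<Sum>M\<in>{M\<in>ydiag k l. pieri_coeff k l e L M}. alt l \<zeta> (qv l M)) = yv l \<zeta> e * alt l \<zeta> (qv l L)"
proof -
  let ?q = "qv l L"
  have sq: "sdec l ?q" by (rule qv_sdec[OF L])
  have q0: "?q 0 < k + l" by (rule qv_0[OF L l])
  have "{M\<in>ydiag k l. pieri_coeff k l e L M} = {M\<in>ydiag k l. pclass l e ?q (qv l M) \<or> pquant l (k + l) e ?q (qv l M)}"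
    using pieri_q[OF L] by blast
  then have "(\<Sum>M\<in>{M\<in>ydiag k l. pieri_coeff k l e L M}. alt l \<zeta> (qv l M))
      = (\<Sum>\<beta>\<in>PBox k l ?q e. alt l \<zeta> (\<lambda>a. ?q a + \<beta> a))"
    using bij_sum[OF l sq q0 hz eps] by simp
  also have "\<dots> = yv l \<zeta> e * alt l \<zeta> ?q"
    unfolding PBox_eq[OF l sq q0]
  proof (rule box_coeff[OF l hz])
    show "\<And>a. Suc a < l \<Longrightarrow> ?q (Suc a) < ?q a" using sq by (simp add: sdec_def)
    show "?q 0 < k + l + ?q (l - 1)" using q0 by simp
    show "e < k + l" using e l by simp
  qed
  finally show ?thesis .
qed

lemma perm_ge_id:
  fixes \<rho> :: "nat \<Rightarrow> nat"
  assumes p: "\<rho> permutes {..<l}" and ge: "\<And>a. a < l \<Longrightarrow> a \<le> \<rho> a"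
  shows "a < l \<Longrightarrow> \<rho> a = a"
proof -
  have s: "(\<Sum>a<l. \<rho> a) = (\<Sum>a<l. a)"
    using sum.permute[OF p, of "\<lambda>a. a"] by (simp add: o_def)
  have "(\<Sum>a<l. \<rho> a - a) = (\<Sum>a<l. \<rho> a) - (\<Sum>a<l. a)"
    by (rule sum_subtractf_nat) (use ge in simp)
  also have "\<dots> = 0" using s by simp
  finally have "\<forall>a\<in>{..<l}. \<rho> a - a = 0" by simp
  then show "a < l \<Longrightarrow> \<rho> a = a" using ge by (metis diff_is_0_eq le_antisym lessThan_iff)
qed

lemma sdec_less: "sdec l q \<Longrightarrow> i < j \<Longrightarrow> j < l \<Longrightarrow> q j < q i"
  using sdec_gap[of l q i j] by simp

lemma sdec_perm_id:
  assumes sq: "sdec l q" and sq': "sdec l q'" and p: "\<rho> permutes {..<l}"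
    and h: "\<And>a. a < l \<Longrightarrow> q a = q' (\<rho> a)"
  shows "a < l \<Longrightarrow> \<rho> a = a"
proof -
  have mono: "\<rho> a < \<rho> a'" if "a < a'" "a' < l" for a a'
  proof (rule ccontr)
    assume "\<not> \<rho> a < \<rho> a'"
    then have le: "\<rho> a' \<le> \<rho> a" by simp
    have al: "a < l" using that by simp
    have ra: "\<rho> a < l" using permutes_lt[OF p al] .
    have "q' (\<rho> a) \<le> q' (\<rho> a')"
    proof (cases "\<rho> a' = \<rho> a")
      case True then show ?thesis by simp
    next
      case ne: False
      then have "\<rho> a' < \<rho> a" using le by simp
      then show ?thesis using sdec_less[OF sq' _ ra] by fastforce
    qed
    moreover have "q a' < q a" using sdec_less[OF sq that] .
    ultimately show False using h that by simp
  qed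
  have ge: "a \<le> \<rho> a" if "a < l" for a
    using that
  proof (induction a)
    case 0 then show ?case by simp
  next
    case (Suc a)
    then have "a \<le> \<rho> a" by simp
    moreover have "\<rho> a < \<rho> (Suc a)" using mono[of a "Suc a"] Suc.prems by simp
    ultimately show ?case by simp
  qed
  show "a < l \<Longrightarrow> \<rho> a = a" by (rule perm_ge_id[OF p ge])
qed

definition Om :: "nat \<Rightarrow> complex \<Rightarrow> complex set" where
  "Om n \<epsilon> = {z. z ^ n = \<epsilon>}"

context
  fixes n :: nat and \<epsilon> :: complex
  assumes n: "1 < n" and eps1: "\<epsilon> = 1 \<or> \<epsilon> = -1"
begin

lemma eps_nz: "\<epsilon> \<noteq> 0" using eps1 by auto

lemma Om_finite: "finite (Om n \<epsilon>)"
  unfolding Om_def using n by (intro finite_nth_roots) simp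

lemma Om_card: "card (Om n \<epsilon>) = n"
  unfolding Om_def using n eps_nz by (intro card_nth_roots) auto

lemma Om_norm: "z \<in> Om n \<epsilon> \<Longrightarrow> norm z = 1"
proof -
  assume "z \<in> Om n \<epsilon>"
  then have "norm z ^ n = 1 ^ n" using eps1 by (auto simp: Om_def norm_power[symmetric])
  then show "norm z = 1" using n by (subst (asm) power_eq_iff_eq_base) auto
qed

lemma Om_cnj: "z \<in> Om n \<epsilon> \<Longrightarrow> cnj z * z = 1"
proof -
  assume z: "z \<in> Om n \<epsilon>"
  have "z * cnj z = of_real ((norm z)\<^sup>2)" by (rule complex_norm_square[symmetric])
  then show "cnj z * z = 1" using Om_norm[OF z] by (simp add: mult.commute)
qed

lemma Om_powsum: assumes d: "0 < d" "d < n" shows "(\<Sum>z\<in>Om n \<epsilon>. z ^ d) = 0"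
proof -
  define \<xi> where "\<xi> = cis (2 * pi / real n)"
  have xn: "\<xi> ^ n = 1"
  proof -
    have n0: "n > 0" using n by simp
    have one: "1 \<in> {..<n}" using n by simp
    have "(\<lambda>k. cis (2 * pi * real k / real n)) 1 \<in> {z. z ^ n = (1::complex)}"
      using bij_betwE[OF Complex.bij_betw_roots_unity[OF n0]] one by blast
    then have "cis (2 * pi * real 1 / real n) ^ n = 1" by (simp only: mem_Collect_eq)
    moreover have "\<xi> = cis (2 * pi * real 1 / real n)" by (simp only: \<xi>_def of_nat_1 mult_1_right)
    ultimately show ?thesis by (simp only:)
  qed
  have xd: "\<xi> ^ d \<noteq> 1"
  proof
    assume "\<xi> ^ d = 1"
    have inj: "inj_on (\<lambda>k. cis (2 * pi * real k / real n)) {..<n}"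
      using Complex.bij_betw_roots_unity[of n] n by (simp add: bij_betw_def)
    have "\<xi> ^ d = cis (real d * (2 * pi / real n))" unfolding \<xi>_def by (rule Complex.DeMoivre)
    moreover have "real d * (2 * pi / real n) = 2 * pi * real d / real n" by simp
    ultimately have "cis (2 * pi * real d / real n) = \<xi> ^ d" by (simp only:)
    also have "\<dots> = cis (2 * pi * real 0 / real n)" using \<open>\<xi> ^ d = 1\<close> by simp
    finally have "d = 0" using inj d n unfolding inj_on_def by (metis lessThan_iff less_trans zero_less_iff_neq_zero)
    with d show False by simp
  qed
  have x0: "\<xi> \<noteq> 0" proof assume "\<xi> = 0" then have "\<xi> ^ n = 0" using n by simp with xn show False by simp qed
  have "(\<Sum>z\<in>Om n \<epsilon>. z ^ d) = (\<Sum>z\<in>Om n \<epsilon>. (\<xi> * z) ^ d)"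
  proof (rule sum.reindex_bij_witness[where i="\<lambda>z. \<xi> * z" and j="\<lambda>z. z / \<xi>"])
  qed (use x0 xn in \<open>auto simp: Om_def power_mult_distrib power_divide\<close>)
  also have "\<dots> = \<xi> ^ d * (\<Sum>z\<in>Om n \<epsilon>. z ^ d)" by (simp add: power_mult_distrib sum_distrib_left)
  finally have "(1 - \<xi> ^ d) * (\<Sum>z\<in>Om n \<epsilon>. z ^ d) = 0" by (simp add: algebra_simps)
  then show ?thesis using xd by simp
qed

lemma Om_orth: assumes "a < n" "b < n"
  shows "(\<Sum>z\<in>Om n \<epsilon>. cnj z ^ a * z ^ b) = (if a = b then of_nat n else 0)"
proof (cases "a \<le> b")
  case True
  have "(\<Sum>z\<in>Om n \<epsilon>. cnj z ^ a * z ^ b) = (\<Sum>z\<in>Om n \<epsilon>. z ^ (b - a))"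
  proof (rule sum.cong[OF refl])
    fix z assume z: "z \<in> Om n \<epsilon>"
    have "cnj z ^ a * z ^ b = (cnj z * z) ^ a * z ^ (b - a)"
      using True by (simp add: power_mult_distrib power_add[symmetric])
    then show "cnj z ^ a * z ^ b = z ^ (b - a)" using Om_cnj[OF z] by simp
  qed
  also have "\<dots> = (if a = b then of_nat n else 0)"
  proof (cases "a = b")
    case True then show ?thesis using Om_card by simp
  next
    case False then show ?thesis using Om_powsum[of "b - a"] True assms by simp
  qed
  finally show ?thesis .
next
  case False
  have "(\<Sum>z\<in>Om n \<epsilon>. cnj z ^ a * z ^ b) = cnj (\<Sum>z\<in>Om n \<epsilon>. z ^ (a - b))"
    unfolding cnj_sum
  proof (rule sum.cong[OF refl])
    fix z assume z: "z \<in> Om n \<epsilon>"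
    have "cnj z ^ a * z ^ b = cnj z ^ (a - b) * (cnj z * z) ^ b"
      using False by (simp add: power_mult_distrib power_add[symmetric])
    then show "cnj z ^ a * z ^ b = cnj (z ^ (a - b))" using Om_cnj[OF z] by simp
  qed
  also have "\<dots> = 0" using Om_powsum[of "a - b"] False assms by simp
  finally show ?thesis using False by simp
qed

lemma alt_orth:
  assumes sq: "sdec l q" and sq': "sdec l q'" and bq: "\<And>a. a < l \<Longrightarrow> q a < n"
    and bq': "\<And>a. a < l \<Longrightarrow> q' a < n"
  shows "(\<Sum>\<zeta>\<in>PiE {..<l} (\<lambda>_. Om n \<epsilon>). cnj (alt l \<zeta> q) * alt l \<zeta> q')
       = (if (\<forall>a<l. q a = q' a) then fact l * of_nat n ^ l else 0)"
proof -
  let ?P = "{\<sigma>. \<sigma> permutes {..<l}}"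
  let ?Z = "PiE {..<l} (\<lambda>_. Om n \<epsilon>)"
  define c where "c \<sigma> \<tau> = (if (\<forall>b<l. q (inv \<sigma> b) = q' (inv \<tau> b)) then of_nat n ^ l else (0::complex))" for \<sigma> \<tau>
  have trm: "(\<Sum>\<zeta>\<in>?Z. (\<Prod>a<l. cnj (\<zeta> (\<sigma> a)) ^ q a) * (\<Prod>a<l. \<zeta> (\<tau> a) ^ q' a)) = c \<sigma> \<tau>"
    if s: "\<sigma> permutes {..<l}" and t: "\<tau> permutes {..<l}" for \<sigma> \<tau>
  proof -
    have si: "inv \<sigma> permutes {..<l}" and ti: "inv \<tau> permutes {..<l}" using s t by (auto intro: permutes_inv)
    have "(\<Sum>\<zeta>\<in>?Z. (\<Prod>a<l. cnj (\<zeta> (\<sigma> a)) ^ q a) * (\<Prod>a<l. \<zeta> (\<tau> a) ^ q' a))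
        = (\<Sum>\<zeta>\<in>?Z. \<Prod>b<l. cnj (\<zeta> b) ^ q (inv \<sigma> b) * \<zeta> b ^ q' (inv \<tau> b))"
    proof (rule sum.cong[OF refl])
      fix \<zeta>
      have 1: "(\<Prod>a<l. cnj (\<zeta> (\<sigma> a)) ^ q a) = (\<Prod>b<l. cnj (\<zeta> b) ^ q (inv \<sigma> b))"
        using prod.permute[OF si, of "\<lambda>a. cnj (\<zeta> (\<sigma> a)) ^ q a"] permutes_inverses(1)[OF s] by (simp add: o_def)
      have 2: "(\<Prod>a<l. \<zeta> (\<tau> a) ^ q' a) = (\<Prod>b<l. \<zeta> b ^ q' (inv \<tau> b))"
        using prod.permute[OF ti, of "\<lambda>a. \<zeta> (\<tau> a) ^ q' a"] permutes_inverses(1)[OF t] by (simp add: o_def)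
      show "(\<Prod>a<l. cnj (\<zeta> (\<sigma> a)) ^ q a) * (\<Prod>a<l. \<zeta> (\<tau> a) ^ q' a)
          = (\<Prod>b<l. cnj (\<zeta> b) ^ q (inv \<sigma> b) * \<zeta> b ^ q' (inv \<tau> b))"
        unfolding 1 2 prod.distrib ..
    qed
    also have "\<dots> = (\<Prod>b<l. \<Sum>z\<in>Om n \<epsilon>. cnj z ^ q (inv \<sigma> b) * z ^ q' (inv \<tau> b))"
      by (rule prod_sum_PiE[symmetric]) (simp_all add: Om_finite)
    also have "\<dots> = (\<Prod>b<l. if q (inv \<sigma> b) = q' (inv \<tau> b) then of_nat n else 0)"
    proof (rule prod.cong[OF refl])
      fix b assume "b \<in> {..<l}"
      then have "inv \<sigma> b < l" "inv \<tau> b < l" using si ti permutes_lt by auto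
      then show "(\<Sum>z\<in>Om n \<epsilon>. cnj z ^ q (inv \<sigma> b) * z ^ q' (inv \<tau> b))
          = (if q (inv \<sigma> b) = q' (inv \<tau> b) then of_nat n else 0)"
        by (intro Om_orth bq bq')
    qed
    also have "\<dots> = c \<sigma> \<tau>"
    proof (cases "\<forall>b<l. q (inv \<sigma> b) = q' (inv \<tau> b)")
      case True then show ?thesis by (simp add: c_def)
    next
      case False
      then obtain b where "b < l" "q (inv \<sigma> b) \<noteq> q' (inv \<tau> b)" by blast
      then show ?thesis using False by (auto simp: c_def intro!: prod_zero)
    qed
    finally show ?thesis .
  qed
  have "(\<Sum>\<zeta>\<in>?Z. cnj (alt l \<zeta> q) * alt l \<zeta> q')
      = (\<Sum>\<zeta>\<in>?Z. \<Sum>\<sigma>\<in>?P. \<Sum>\<tau>\<in>?P. of_int (sign \<sigma> * sign \<tau>) *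
            ((\<Prod>a<l. cnj (\<zeta> (\<sigma> a)) ^ q a) * (\<Prod>a<l. \<zeta> (\<tau> a) ^ q' a)))"
    unfolding alt_def altg_def cnj_sum sum_product
    by (intro sum.cong refl) (simp add: algebra_simps)
  also have "\<dots> = (\<Sum>\<sigma>\<in>?P. \<Sum>\<tau>\<in>?P. of_int (sign \<sigma> * sign \<tau>) *
            (\<Sum>\<zeta>\<in>?Z. (\<Prod>a<l. cnj (\<zeta> (\<sigma> a)) ^ q a) * (\<Prod>a<l. \<zeta> (\<tau> a) ^ q' a)))"
    by (simp add: sum_distrib_left sum.swap[of _ ?Z])
  also have "\<dots> = (\<Sum>\<sigma>\<in>?P. \<Sum>\<tau>\<in>?P. of_int (sign \<sigma> * sign \<tau>) * c \<sigma> \<tau>)"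
    by (intro sum.cong refl) (simp add: trm)
  also have "\<dots> = (if (\<forall>a<l. q a = q' a) then fact l * of_nat n ^ l else 0)"
  proof (cases "\<forall>a<l. q a = q' a")
    case False
    have cz: "c \<sigma> \<tau> = 0" if s: "\<sigma> permutes {..<l}" and t: "\<tau> permutes {..<l}" for \<sigma> \<tau>
    proof (rule ccontr)
      assume "c \<sigma> \<tau> \<noteq> 0"
      then have h: "\<And>b. b < l \<Longrightarrow> q (inv \<sigma> b) = q' (inv \<tau> b)" by (auto simp: c_def split: if_splits)
      have rp: "inv \<tau> \<circ> \<sigma> permutes {..<l}" using s t by (intro permutes_compose permutes_inv)
      have h': "\<And>a. a < l \<Longrightarrow> q a = q' ((inv \<tau> \<circ> \<sigma>) a)"
      proof -
        fix a assume a: "a < l"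
        have "\<sigma> a < l" using s a permutes_lt by blast
        then show "q a = q' ((inv \<tau> \<circ> \<sigma>) a)" using h[of "\<sigma> a"] permutes_inverses(2)[OF s] by simp
      qed
      have "\<And>a. a < l \<Longrightarrow> q a = q' a" using h' sdec_perm_id[OF sq sq' rp h'] by simp
      with False show False by blast
    qed
    have "(\<Sum>\<sigma>\<in>?P. \<Sum>\<tau>\<in>?P. of_int (sign \<sigma> * sign \<tau>) * c \<sigma> \<tau>) = 0"
      by (intro sum.neutral ballI) (simp add: cz)
    then show ?thesis using False by auto
  next
    case True
    have "(\<Sum>\<tau>\<in>?P. of_int (sign \<sigma> * sign \<tau>) * c \<sigma> \<tau>) = of_nat n ^ l" if s: "\<sigma> permutes {..<l}" for \<sigma>
    proof -
      have "(\<Sum>\<tau>\<in>?P. of_int (sign \<sigma> * sign \<tau>) * c \<sigma> \<tau>) = (\<Sum>\<tau>\<in>?P. if \<tau> = \<sigma> then of_nat n ^ l else 0)"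
      proof (rule sum.cong[OF refl])
        fix \<tau> assume "\<tau> \<in> ?P"
        then have t: "\<tau> permutes {..<l}" by simp
        show "of_int (sign \<sigma> * sign \<tau>) * c \<sigma> \<tau> = (if \<tau> = \<sigma> then of_nat n ^ l else 0)"
        proof (cases "\<tau> = \<sigma>")
          case True
          then show ?thesis using \<open>\<forall>a<l. q a = q' a\<close> s permutes_lt[OF permutes_inv[OF s]]
            by (simp add: c_def)
        next
          case ne: False
          have "c \<sigma> \<tau> = 0"
          proof (rule ccontr)
            assume "c \<sigma> \<tau> \<noteq> 0"
            then have h: "\<And>b. b < l \<Longrightarrow> q (inv \<sigma> b) = q' (inv \<tau> b)" by (auto simp: c_def split: if_splits)
            have rp: "inv \<tau> \<circ> \<sigma> permutes {..<l}" using s t by (intro permutes_compose permutes_inv)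
            have h': "\<And>a. a < l \<Longrightarrow> q a = q' ((inv \<tau> \<circ> \<sigma>) a)"
            proof -
              fix a assume a: "a < l"
              have "\<sigma> a < l" using s a permutes_lt by blast
              then show "q a = q' ((inv \<tau> \<circ> \<sigma>) a)" using h[of "\<sigma> a"] permutes_inverses(2)[OF s] by simp
            qed
            have id: "\<And>a. a < l \<Longrightarrow> inv \<tau> (\<sigma> a) = a" using sdec_perm_id[OF sq sq' rp h'] by simp
            have "\<sigma> = \<tau>"
            proof (rule ext)
              fix a show "\<sigma> a = \<tau> a"
              proof (cases "a < l")
                case True
                then have "\<tau> (inv \<tau> (\<sigma> a)) = \<tau> a" using id by simp
                then show ?thesis using permutes_inverses(1)[OF t] by simp
              next
                case False
                then show ?thesis using s t by (simp add: permutes_def)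
              qed
            qed
            with ne show False by simp
          qed
          then show ?thesis using ne by simp
        qed
      qed
      also have "\<dots> = of_nat n ^ l" using s by (simp add: finite_permutations)
      finally show ?thesis .
    qed
    then have "(\<Sum>\<sigma>\<in>?P. \<Sum>\<tau>\<in>?P. of_int (sign \<sigma> * sign \<tau>) * c \<sigma> \<tau>) = (\<Sum>\<sigma>\<in>?P. of_nat n ^ l)"
      by (intro sum.cong refl) simp
    also have "\<dots> = of_nat (card ?P) * of_nat n ^ l" by simp
    also have "card ?P = fact l" by (rule card_permutations) simp_all
    finally show ?thesis using True by simp
  qed
  finally show ?thesis .
qed

end

lemma ydiag_zero: "L \<in> ydiag k l \<Longrightarrow> L ! 0 = 0 \<Longrightarrow> L = replicate l 0"
proof -
  assume L: "L \<in> ydiag k l" and z: "L ! 0 = 0"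
  show "L = replicate l 0"
  proof (rule nth_equalityI)
    show "length L = length (replicate l 0)" using ydiag_D(1)[OF L] by simp
    fix i assume "i < length L"
    then have "L ! i \<le> L ! 0" using ydiag_D(2)[OF L, of 0 i] ydiag_D(1)[OF L] by simp
    then show "L ! i = replicate l 0 ! i" using z \<open>i < length L\<close> ydiag_D(1)[OF L] by simp
  qed
qed

lemma replicate_ydiag: "replicate l 0 \<in> ydiag k l"
  by (simp add: ydiag_def sorted_wrt_iff_nth_less)

lemma uniq:
  fixes v :: "nat list \<Rightarrow> complex"
  assumes l: "1 \<le> l"
    and eig: "\<And>e L. 1 \<le> e \<Longrightarrow> e \<le> k \<Longrightarrow> L \<in> ydiag k l \<Longrightarrow>
       (\<Sum>M\<in>{M\<in>ydiag k l. pieri_coeff k l e L M}. v M) = y e * v L"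
    and v0: "v (replicate l 0) = 0"
  shows "L \<in> ydiag k l \<Longrightarrow> v L = 0"
proof (induction L rule: measure_induct_rule[where f="\<lambda>L. sum_list L * (k + 1) + (k - L ! 0)"])
  case (less L)
  note LL = less.prems
  show ?case
  proof (cases "L ! 0 = 0")
    case True then show ?thesis using ydiag_zero[OF LL] v0 by simp
  next
    case False
    have lenL: "length L = l" using ydiag_D(1)[OF LL] .
    obtain x xs where Lx: "L = x # xs" using lenL l by (cases L) auto
    have lxs: "length xs = l - 1" using lenL Lx by simp
    have x0: "x = L ! 0" using Lx by simp
    have xk: "x \<le> k" using ydiag_D(3)[OF LL, of 0] l x0 by simp
    have xpos: "1 \<le> x" using False x0 by simp
    have sortL: "sorted_wrt (\<ge>) (x # xs)" using LL Lx by (simp add: ydiag_def)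
    have setL: "\<forall>y\<in>set (x # xs). y \<le> k" using LL Lx by (simp add: ydiag_def)
    define \<nu> where "\<nu> = xs @ [0]"
    have \<nu>y: "\<nu> \<in> ydiag k l"
      using sortL setL lxs l by (auto simp: ydiag_def \<nu>_def sorted_wrt_append)
    have s\<nu>: "sum_list \<nu> = sum_list xs" by (simp add: \<nu>_def)
    have sL: "sum_list L = x + sum_list xs" using Lx by simp
    have \<nu>nth: "\<And>j. j < l \<Longrightarrow> \<nu> ! j = (if j < l - 1 then xs ! j else 0)"
      using lxs by (auto simp: \<nu>_def nth_append)
    have Lnth: "\<And>j. L ! Suc j = xs ! j" using Lx by simp
    have IHnu: "v \<nu> = 0"
    proof (rule less.IH[OF _ \<nu>y])
      have kx: "k \<le> k * x" using xpos by simp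
      have "sum_list L * (k + 1) = sum_list \<nu> * (k + 1) + x * (k + 1)" using s\<nu> sL by (simp add: algebra_simps)
      moreover have "k - \<nu> ! 0 < x * (k + 1)"
      proof -
        have "x * (k + 1) = x + k * x" by (simp add: algebra_simps)
        then show ?thesis using kx xpos by linarith
      qed
      ultimately show "sum_list \<nu> * (k + 1) + (k - \<nu> ! 0) < sum_list L * (k + 1) + (k - L ! 0)" by linarith
    qed
    have pL: "pieri_coeff k l x \<nu> L"
      unfolding pieri_coeff_def
    proof (intro conjI disjI1)
      show "L \<in> ydiag k l" by fact
      show "sum_list L = sum_list \<nu> + x" using s\<nu> sL by simp
      show "\<forall>j<l. \<nu> ! j \<le> L ! j"
      proof (intro allI impI)
        fix j assume j: "j < l"
        show "\<nu> ! j \<le> L ! j"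
        proof (cases "j < l - 1")
          case True
          then have "\<nu> ! j = L ! Suc j" using \<nu>nth[OF j] Lnth by simp
          then show ?thesis using ydiag_D(2)[OF LL, of j "Suc j"] True by simp
        next
          case False then show ?thesis using \<nu>nth[OF j] by simp
        qed
      qed
      show "\<forall>j. j + 1 < l \<longrightarrow> L ! (j + 1) \<le> \<nu> ! j"
      proof (intro allI impI)
        fix j assume j: "j + 1 < l"
        then have "\<nu> ! j = xs ! j" using \<nu>nth[of j] by simp
        then show "L ! (j + 1) \<le> \<nu> ! j" using Lnth by simp
      qed
    qed
    have others: "v M = 0" if M: "M \<in> ydiag k l" and pM: "pieri_coeff k l x \<nu> M" and ne: "M \<noteq> L" for M
    proof (rule less.IH[OF _ M])
      have lenM: "length M = l" using ydiag_D(1)[OF M] .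
      have M0k: "M ! 0 \<le> k" using ydiag_D(3)[OF M, of 0] l by simp
      from pM have "(sum_list M = sum_list \<nu> + x \<and> (\<forall>j<l. \<nu> ! j \<le> M ! j) \<and> (\<forall>j. j + 1 < l \<longrightarrow> M ! (j + 1) \<le> \<nu> ! j))
          \<or> (sum_list M + (k + l) = sum_list \<nu> + x)"
        unfolding pieri_coeff_def by blast
      then show "sum_list M * (k + 1) + (k - M ! 0) < sum_list L * (k + 1) + (k - L ! 0)"
      proof
        assume q: "sum_list M + (k + l) = sum_list \<nu> + x"
        then have "sum_list M + 1 \<le> sum_list L" using s\<nu> sL l by simp
        then have "(sum_list M + 1) * (k + 1) \<le> sum_list L * (k + 1)" by (rule mult_right_mono) simp
        then show ?thesis by (simp add: algebra_simps)
      next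
        assume c: "sum_list M = sum_list \<nu> + x \<and> (\<forall>j<l. \<nu> ! j \<le> M ! j) \<and> (\<forall>j. j + 1 < l \<longrightarrow> M ! (j + 1) \<le> \<nu> ! j)"
        obtain y ys where My: "M = y # ys" using lenM l by (cases M) auto
        have lys: "length ys = l - 1" using lenM My by simp
        have sM: "sum_list M = y + sum_list ys" using My by simp
        have le: "\<And>j. j < l - 1 \<Longrightarrow> ys ! j \<le> xs ! j"
        proof -
          fix j assume j: "j < l - 1"
          have "M ! (j + 1) \<le> \<nu> ! j" using c j by simp
          then show "ys ! j \<le> xs ! j" using My \<nu>nth[of j] j by simp
        qed
        have sys: "sum_list ys = (\<Sum>j<l - 1. ys ! j)" using lys by (simp add: sum_list_sum_nth atLeast0LessThan)
        have sxs: "sum_list xs = (\<Sum>j<l - 1. xs ! j)" using lxs by (simp add: sum_list_sum_nth atLeast0LessThan)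
        have y0: "M ! 0 = y" using My by simp
        have "x < y"
        proof (rule ccontr)
          assume "\<not> x < y"
          then have "y \<le> x" by simp
          moreover have "sum_list ys \<le> sum_list xs" unfolding sys sxs by (rule sum_mono) (use le in simp)
          moreover have "y + sum_list ys = x + sum_list xs" using c sM s\<nu> by simp
          ultimately have yx: "y = x" and eqs: "sum_list ys = sum_list xs" by simp_all
          have "ys = xs"
          proof (rule nth_equalityI)
            show "length ys = length xs" using lys lxs by simp
            fix j assume j: "j < length ys"
            show "ys ! j = xs ! j"
            proof (rule ccontr)
              assume "ys ! j \<noteq> xs ! j"
              then have "ys ! j < xs ! j" using le[of j] j lys by simp
              then have "(\<Sum>j<l - 1. ys ! j) < (\<Sum>j<l - 1. xs ! j)"
                using j lys by (intro sum_strict_mono_ex1) (auto intro: le)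
              then show False using eqs sys sxs by simp
            qed
          qed
          then have "M = L" using yx My Lx by simp
          with ne show False by simp
        qed
        then have "k - M ! 0 < k - L ! 0" using y0 x0 M0k by simp
        moreover have "sum_list M = sum_list L" using c s\<nu> sL by simp
        ultimately show ?thesis by simp
      qed
    qed
    have "(\<Sum>M\<in>{M\<in>ydiag k l. pieri_coeff k l x \<nu> M}. v M) = y x * v \<nu>"
      by (rule eig[OF xpos xk \<nu>y])
    also have "\<dots> = 0" using IHnu by simp
    also have "(\<Sum>M\<in>{M\<in>ydiag k l. pieri_coeff k l x \<nu> M}. v M) = v L"
    proof -
      have fin: "finite {M\<in>ydiag k l. pieri_coeff k l x \<nu> M}"
      proof (rule finite_subset)
        show "{M\<in>ydiag k l. pieri_coeff k l x \<nu> M} \<subseteq> {M. set M \<subseteq> {..k} \<and> length M = l}"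
          by (auto simp: ydiag_def)
        show "finite {M. set M \<subseteq> {..k} \<and> length M = l}" by (rule finite_lists_length_eq) simp
      qed
      have "(\<Sum>M\<in>{M\<in>ydiag k l. pieri_coeff k l x \<nu> M}. v M) = v L +
          (\<Sum>M\<in>{M\<in>ydiag k l. pieri_coeff k l x \<nu> M} - {L}. v M)"
        using fin pL LL by (subst sum.remove[of _ L]) auto
      also have "(\<Sum>M\<in>{M\<in>ydiag k l. pieri_coeff k l x \<nu> M} - {L}. v M) = 0"
        by (rule sum.neutral) (use others in auto)
      finally show ?thesis by simp
    qed
    finally show ?thesis by simp
  qed
qed

lemma pieri0:
  assumes L: "L \<in> ydiag k l" and M: "M \<in> ydiag k l" and l: "1 \<le> l"
  shows "pieri_coeff k l 0 L M \<longleftrightarrow> M = L"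
proof
  assume "M = L"
  then show "pieri_coeff k l 0 L M"
    using M ydiag_D(2)[OF L] by (auto simp: pieri_coeff_def)
next
  assume p: "pieri_coeff k l 0 L M"
  let ?q = "qv l L" and ?q' = "qv l M"
  have "pclass l 0 ?q ?q' \<or> pquant l (k + l) 0 ?q ?q'" using p pieri_q[OF L M] by simp
  then show "M = L"
  proof
    assume c: "pclass l 0 ?q ?q'"
    then have s: "(\<Sum>a<l. ?q' a) = (\<Sum>a<l. ?q a)" and le: "\<And>j. j < l \<Longrightarrow> ?q j \<le> ?q' j"
      by (auto simp: pclass_def)
    have eq: "\<And>a. a < l \<Longrightarrow> ?q' a = ?q a"
    proof (rule ccontr)
      fix a assume a: "a < l" and ne: "?q' a \<noteq> ?q a"
      then have "?q a < ?q' a" using le[OF a] by simp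
      then have "(\<Sum>a<l. ?q a) < (\<Sum>a<l. ?q' a)"
        using a by (intro sum_strict_mono_ex1) (auto intro: le)
      with s show False by simp
    qed
    have "M = part l ?q'" using part_qv[OF M] by simp
    also have "\<dots> = part l ?q" using eq by (simp add: part_def)
    also have "\<dots> = L" by (rule part_qv[OF L])
    finally show ?thesis .
  next
    assume c: "pquant l (k + l) 0 ?q ?q'"
    then have s: "(\<Sum>a<l. ?q' a) + (k + l) = (\<Sum>a<l. ?q a)" and lt: "\<And>j. j < l \<Longrightarrow> ?q' j < ?q j"
      and le: "\<And>j. Suc j < l \<Longrightarrow> ?q (Suc j) \<le> ?q' j"
      by (auto simp: pquant_def)
    obtain m where m: "l = Suc m" using l by (cases l) auto
    have s1: "(\<Sum>a<l. ?q a) = ?q 0 + (\<Sum>a<m. ?q (Suc a))" unfolding m by (rule sum.lessThan_Suc_shift)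
    have s2: "(\<Sum>a<l. ?q' a) = (\<Sum>a<m. ?q' a) + ?q' m" unfolding m by simp
    have s3: "(\<Sum>a<m. ?q (Suc a)) \<le> (\<Sum>a<m. ?q' a)" by (rule sum_mono) (use le m in simp)
    have "?q 0 < k + l" by (rule qv_0[OF L l])
    then show ?thesis using s s1 s2 s3 by simp
  qed
qed

lemma special_op_zero: "special_op k l e (\<lambda>_. 0 :: 'a::comm_ring_1) = (\<lambda>_. 0)"
  by (rule ext) (simp add: special_op_def)

lemma foldr_zero:
  assumes "i \<in> set xs" "\<And>acc. g i acc = (\<lambda>_. 0 :: 'a::comm_ring_1)" "\<And>j. g j (\<lambda>_. 0) = (\<lambda>_. 0)"
  shows "foldr g xs Y = (\<lambda>_. 0)"
  using assms(1)
proof (induction xs)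
  case Nil then show ?case by simp
next
  case (Cons x xs)
  show ?case
  proof (cases "x = i")
    case True then show ?thesis using assms(2) by simp
  next
    case False
    then have "i \<in> set xs" using Cons.prems by simp
    then show ?thesis using Cons.IH assms(3) by simp
  qed
qed

lemma special_op0_id:
  assumes l: "1 \<le> l" and nu: "\<nu> \<in> ydiag k l"
  shows "special_op k l 0 Y \<nu> = Y \<nu>"
proof -
  have "special_op k l 0 Y \<nu> = (\<Sum>L\<in>ydiag k l. if pieri_coeff k l 0 L \<nu> then Y L else 0)"
    by (simp add: special_op_def)
  also have "\<dots> = (\<Sum>L\<in>ydiag k l. if L = \<nu> then Y L else 0)"
    by (intro sum.cong refl) (use pieri0 nu l in auto)
  also have "\<dots> = Y \<nu>"
  proof -
    have fin: "finite (ydiag k l)"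
    proof (rule finite_subset)
      show "ydiag k l \<subseteq> {M. set M \<subseteq> {..k} \<and> length M = l}" by (auto simp: ydiag_def)
      show "finite {M. set M \<subseteq> {..k} \<and> length M = l}" by (rule finite_lists_length_eq) simp
    qed
    then show ?thesis using nu by simp
  qed
  finally show ?thesis .
qed

lemma ydiag_finite: "finite (ydiag k l)"
proof (rule finite_subset)
  show "ydiag k l \<subseteq> {M. set M \<subseteq> {..k} \<and> length M = l}" by (auto simp: ydiag_def)
  show "finite {M. set M \<subseteq> {..k} \<and> length M = l}" by (rule finite_lists_length_eq) simp
qed

lemma special_op_cong:
  assumes "\<And>L. L \<in> ydiag k l \<Longrightarrow> Y L = Z L"
  shows "special_op k l e Y = special_op k l e Z"
  unfolding special_op_def by (rule ext) (intro if_cong refl sum.cong, simp add: assms)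

lemma foldr_special0:
  assumes l: "1 \<le> l" and "\<forall>i\<in>set xs. f i = 0"
  shows "\<nu> \<in> ydiag k l \<Longrightarrow> foldr (\<lambda>i acc. special_op k l (f i) acc) xs Y \<nu> = Y \<nu>"
  using assms(2)
proof (induction xs arbitrary: \<nu>)
  case Nil then show ?case by simp
next
  case (Cons x xs)
  have "foldr (\<lambda>i acc. special_op k l (f i) acc) (x # xs) Y \<nu>
      = special_op k l 0 (foldr (\<lambda>i acc. special_op k l (f i) acc) xs Y) \<nu>"
    using Cons.prems by simp
  also have "\<dots> = foldr (\<lambda>i acc. special_op k l (f i) acc) xs Y \<nu>"
    by (rule special_op0_id[OF l Cons.prems(1)])
  also have "\<dots> = Y \<nu>" using Cons by simp
  finally show ?case .
qed

definition rowd :: "nat \<Rightarrow> nat \<Rightarrow> nat list" where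
  "rowd l e = e # replicate (l - 1) 0"

lemma sorted_rep0: "sorted_wrt (\<ge>) (replicate m (0::nat))"
  by (induction m) auto

lemma rowd_ydiag: "1 \<le> l \<Longrightarrow> e \<le> k \<Longrightarrow> rowd l e \<in> ydiag k l"
  using sorted_rep0[of "l - 1"] by (auto simp: rowd_def ydiag_def)

lemma giambelli_row:
  fixes Y :: "nat list \<Rightarrow> 'a::comm_ring_1"
  assumes l: "1 \<le> l" and e: "e \<le> k"
  shows "giambelli_op k l (rowd l e) Y = special_op k l (int e) Y"
proof (rule ext)
  fix \<mu>
  let ?R = "rowd l e"
  define F where "F w = foldr (\<lambda>i acc. special_op k l (int (?R ! i) + int (w i) - int i) acc) [0..<l] Y" for w :: "nat \<Rightarrow> nat"
  have P: "finite {w. w permutes {..<l}}" by (simp add: finite_permutations)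
  have zero: "F w = (\<lambda>_. 0)" if w: "w permutes {..<l}" and ne: "w \<noteq> id" for w
  proof -
    have "\<exists>i<l. w i < i"
    proof (rule ccontr)
      assume "\<not> (\<exists>i<l. w i < i)"
      then have ge: "\<And>i. i < l \<Longrightarrow> i \<le> w i" by (meson not_less)
      have "w = id"
      proof (rule ext)
        fix i show "w i = id i"
        proof (cases "i < l")
          case True then show ?thesis using perm_ge_id[OF w ge] by simp
        next
          case False then show ?thesis using w by (simp add: permutes_def)
        qed
      qed
      with ne show False by simp
    qed
    then obtain i where i: "i < l" "w i < i" by blast
    then have i0: "i \<noteq> 0" by simp
    have Ri: "?R ! i = 0" using i i0 by (simp add: rowd_def nth_Cons')
    show ?thesis unfolding F_def
    proof (rule foldr_zero[where i=i])
      show "i \<in> set [0..<l]" using i by simp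
      show "\<And>acc. special_op k l (int (?R ! i) + int (w i) - int i) acc = (\<lambda>_. 0)"
        using Ri i by (simp add: special_op_def)
      show "\<And>j. special_op k l (int (?R ! j) + int (w j) - int j) (\<lambda>_. 0) = (\<lambda>_. 0)"
        by (rule special_op_zero)
    qed
  qed
  have "giambelli_op k l ?R Y \<mu> = (\<Sum>w\<in>{w. w permutes {..<l}}. of_int (sign w) * F w \<mu>)"
    by (simp add: giambelli_op_def F_def)
  also have "\<dots> = of_int (sign (id :: nat \<Rightarrow> nat)) * F id \<mu>"
    using P zero by (subst sum.remove[of _ id]) (auto intro!: sum.neutral)
  also have "\<dots> = F id \<mu>" by simp
  also have "F id = special_op k l (int e) (foldr (\<lambda>i acc. special_op k l (int (?R ! i) + int i - int i) acc) [1..<l] Y)"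
  proof -
    have "[0..<l] = 0 # [1..<l]" using l by (simp add: upt_rec)
    then show ?thesis by (simp add: F_def rowd_def)
  qed
  also have "\<dots> = special_op k l (int e) Y"
  proof (rule special_op_cong)
    fix L assume "L \<in> ydiag k l"
    show "foldr (\<lambda>i acc. special_op k l (int (?R ! i) + int i - int i) acc) [1..<l] Y L = Y L"
      by (rule foldr_special0[OF l _ \<open>L \<in> ydiag k l\<close>]) (auto simp: rowd_def nth_Cons')
  qed
  finally show "giambelli_op k l ?R Y \<mu> = special_op k l (int e) Y \<mu>" by simp
qed

lemma evalpt_schub:
  assumes L: "L \<in> ydiag k l" shows "evalpt k l p (schub L) = p L"
proof -
  have "evalpt k l p (schub L) = (\<Sum>lam\<in>ydiag k l. if lam = L then p lam else 0)"
    unfolding evalpt_def schub_def by (intro sum.cong) auto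
  also have "\<dots> = p L" using L ydiag_finite[of k l] by simp
  finally show ?thesis .
qed

lemma supported_schub: "L \<in> ydiag k l \<Longrightarrow> supported k l (schub L :: nat list \<Rightarrow> 'a::zero_neq_one)"
  by (auto simp: supported_def schub_def)

lemma spec_eig:
  assumes sp: "spec_point k l p" and l: "1 \<le> l" and e: "e \<le> k" and L: "L \<in> ydiag k l"
  shows "(\<Sum>M\<in>{M\<in>ydiag k l. pieri_coeff k l e L M}. p M) = p (rowd l e) * p L"
proof -
  have R: "rowd l e \<in> ydiag k l" by (rule rowd_ydiag[OF l e])
  have mult: "evalpt k l p (qprod k l (schub (rowd l e)) (schub L)) = evalpt k l p (schub (rowd l e)) * evalpt k l p (schub L)"
    using sp supported_schub[OF R] supported_schub[OF L] unfolding spec_point_def by blast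
  have q: "qprod k l (schub (rowd l e)) (schub L :: nat list \<Rightarrow> complex) = special_op k l (int e) (schub L :: nat list \<Rightarrow> complex)"
  proof (rule ext)
    fix \<nu>
    have "qprod k l (schub (rowd l e)) (schub L :: nat list \<Rightarrow> complex) \<nu> = (\<Sum>lam\<in>ydiag k l. (if lam = rowd l e then 1 else 0) * giambelli_op k l lam (schub L :: nat list \<Rightarrow> complex) \<nu>)"
      by (simp add: qprod_def schub_def)
    also have "\<dots> = (\<Sum>lam\<in>ydiag k l. if lam = rowd l e then giambelli_op k l lam (schub L :: nat list \<Rightarrow> complex) \<nu> else 0)"
      by (intro sum.cong) auto
    also have "\<dots> = giambelli_op k l (rowd l e) (schub L :: nat list \<Rightarrow> complex) \<nu>"
      using R ydiag_finite[of k l] by simp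
    also have "\<dots> = special_op k l (int e) (schub L) \<nu>" by (simp add: giambelli_row[OF l e])
    finally show "qprod k l (schub (rowd l e)) (schub L :: nat list \<Rightarrow> complex) \<nu> = special_op k l (int e) (schub L) \<nu>" .
  qed
  have "evalpt k l p (special_op k l (int e) (schub L)) = (\<Sum>\<nu>\<in>ydiag k l. (if pieri_coeff k l e L \<nu> then 1 else 0) * p \<nu>)"
    unfolding evalpt_def
  proof (rule sum.cong[OF refl])
    fix \<nu> assume "\<nu> \<in> ydiag k l"
    have "special_op k l (int e) (schub L) \<nu> = (\<Sum>lam\<in>ydiag k l. if pieri_coeff k l e lam \<nu> then (if lam = L then 1 else 0) else (0::complex))"
      using e by (simp add: special_op_def schub_def)
    also have "\<dots> = (\<Sum>lam\<in>ydiag k l. if lam = L then (if pieri_coeff k l e lam \<nu> then 1 else 0) else (0::complex))"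
      by (intro sum.cong) auto
    also have "\<dots> = (if pieri_coeff k l e L \<nu> then 1 else 0)"
      using L ydiag_finite[of k l] by simp
    finally show "special_op k l (int e) (schub L) \<nu> * p \<nu> = (if pieri_coeff k l e L \<nu> then 1 else 0) * p \<nu>" by simp
  qed
  also have "\<dots> = (\<Sum>M\<in>{M\<in>ydiag k l. pieri_coeff k l e L M}. p M)"
  proof -
    have "(\<Sum>\<nu>\<in>ydiag k l. (if pieri_coeff k l e L \<nu> then 1 else 0) * p \<nu>) = (\<Sum>\<nu>\<in>ydiag k l. if pieri_coeff k l e L \<nu> then p \<nu> else 0)"
      by (intro sum.cong) auto
    then show ?thesis by (simp add: sum.inter_filter[OF ydiag_finite])
  qed
  finally show ?thesis using mult q evalpt_schub[OF L] evalpt_schub[OF R] by simp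
qed

lemma spec_one: "spec_point k l p \<Longrightarrow> p (replicate l 0) = 1"
  using evalpt_schub[OF replicate_ydiag, of k l p] by (simp add: spec_point_def)

definition rv :: "nat \<Rightarrow> nat \<Rightarrow> nat" where
  "rv l i = (if i < l then l - 1 - i else i)"

lemma rv_permutes: "rv l permutes {..<l}"
proof -
  have "bij_betw (rv l) {..<l} {..<l}"
    by (rule bij_betw_byWitness[where f'="rv l"]) (auto simp: rv_def)
  moreover have "\<And>x. x \<notin> {..<l} \<Longrightarrow> rv l x = x" by (simp add: rv_def)
  ultimately show ?thesis by (rule bij_imp_permutes)
qed

lemma my_permutes_funpow: "p permutes S \<Longrightarrow> (p ^^ n) permutes S"
  by (induction n) (auto simp: permutes_id intro: permutes_compose)

lemma cyc_pow:
  assumes "d \<le> l" "i < l"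
  shows "(cyc l ^^ d) i = (if d \<le> i then i - d else i + l - d)"
  using assms(1)
proof (induction d)
  case 0 then show ?case by simp
next
  case (Suc d)
  then have IH: "(cyc l ^^ d) i = (if d \<le> i then i - d else i + l - d)" by simp
  have st: "(cyc l ^^ Suc d) i = cyc l ((cyc l ^^ d) i)" by simp
  show ?case
  proof (cases "Suc d \<le> i")
    case True then show ?thesis unfolding st IH using assms(2) by (simp add: cyc_def)
  next
    case False
    show ?thesis
    proof (cases "d = i")
      case True then show ?thesis unfolding st IH using assms(2) Suc.prems by (simp add: cyc_def)
    next
      case False
      then have "i < d" using \<open>\<not> Suc d \<le> i\<close> by simp
      then show ?thesis unfolding st IH using assms(2) Suc.prems by (simp add: cyc_def)
    qed
  qed
qed

lemma sign_cyc_pow: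
  assumes l: "1 \<le> l"
  shows "sign (cyc l ^^ d) = (-1) ^ ((l - 1) * d)"
proof (induction d)
  case 0 then show ?case by simp
next
  case (Suc d)
  have "sign (cyc l ^^ Suc d) = sign (cyc l \<circ> (cyc l ^^ d))" by simp
  also have "\<dots> = sign (cyc l) * sign (cyc l ^^ d)"
    by (rule sign_compose) (use cyc_permutes[OF l] my_permutes_funpow[OF cyc_permutes[OF l]] in \<open>auto intro: permutes_imp_permutation\<close>)
  also have "\<dots> = (-1) ^ ((l - 1) * Suc d)" using Suc sign_cyc[OF l] by (simp add: power_add)
  finally show ?case .
qed

definition pid :: "nat \<Rightarrow> nat \<Rightarrow> nat \<Rightarrow> nat" where
  "pid l d = rv l \<circ> (cyc l ^^ d)"

lemma pid_permutes: "1 \<le> l \<Longrightarrow> pid l d permutes {..<l}"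
  unfolding pid_def by (intro permutes_compose my_permutes_funpow cyc_permutes rv_permutes)

lemma pid_val:
  assumes "d \<le> l" "j < l"
  shows "pid l d j = (if j < d then d - 1 - j else l - 1 - j + d)"
  using cyc_pow[OF assms] assms by (auto simp: pid_def rv_def)

lemma sign_pid:
  assumes l: "1 \<le> l"
  shows "sign (pid l d) = sign (rv l) * (-1) ^ ((l - 1) * d)"
  unfolding pid_def
  by (subst sign_compose) (use rv_permutes my_permutes_funpow[OF cyc_permutes[OF l]] sign_cyc_pow[OF l] in \<open>auto intro: permutes_imp_permutation\<close>)

lemma durfee_props:
  assumes L: "L \<in> ydiag k l"
  shows "durfee l L \<le> l" "\<And>a. a < l \<Longrightarrow> a < durfee l L \<longleftrightarrow> a + 1 \<le> L ! a"
proof -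
  define S where "S = {i\<in>{1..l}. i \<le> L ! (i - 1)}"
  have finS: "finite S" by (simp add: S_def)
  have down: "\<And>i j. i \<in> S \<Longrightarrow> 1 \<le> j \<Longrightarrow> j \<le> i \<Longrightarrow> j \<in> S"
  proof -
    fix i j assume i: "i \<in> S" and j: "1 \<le> j" "j \<le> i"
    have "j - 1 \<le> i - 1" using j by simp
    moreover have "i - 1 < l" using i by (auto simp: S_def)
    ultimately have "L ! (i - 1) \<le> L ! (j - 1)" using ydiag_D(2)[OF L, of "j - 1" "i - 1"] by simp
    then show "j \<in> S" using i j by (simp add: S_def)
  qed
  have dS: "durfee l L = (if S = {} then 0 else Max S)"
    unfolding durfee_def S_def by auto
  show "durfee l L \<le> l"
  proof (cases "S = {}")
    case True then show ?thesis using dS by simp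
  next
    case False then show ?thesis using dS finS Max_in[OF finS False] by (auto simp: S_def)
  qed
  show "\<And>a. a < l \<Longrightarrow> a < durfee l L \<longleftrightarrow> a + 1 \<le> L ! a"
  proof -
    fix a assume a: "a < l"
    show "a < durfee l L \<longleftrightarrow> a + 1 \<le> L ! a"
    proof
      assume "a < durfee l L"
      then have ne: "S \<noteq> {}" and "a + 1 \<le> Max S" using dS by (auto split: if_splits)
      then have "a + 1 \<in> S" using down[OF Max_in[OF finS ne]] by simp
      then show "a + 1 \<le> L ! a" by (simp add: S_def)
    next
      assume "a + 1 \<le> L ! a"
      then have "a + 1 \<in> S" using a by (simp add: S_def)
      then have "a + 1 \<le> Max S" "S \<noteq> {}" using finS by auto
      then show "a < durfee l L" using dS by simp
    qed
  qed
qed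

definition rr :: "nat \<Rightarrow> nat \<Rightarrow> nat list \<Rightarrow> nat \<Rightarrow> nat" where
  "rr k l L a = (if a < durfee l L then (k + l) - L ! a + a else a - L ! a)"

context
  fixes k l :: nat and L :: "nat list"
  assumes l: "1 \<le> l" and L: "L \<in> ydiag k l"
begin

abbreviation "dd \<equiv> durfee l L"
abbreviation "RR \<equiv> (\<lambda>j. rr k l L (pid l dd j))"

lemma dd_le: "dd \<le> l" using durfee_props(1)[OF L] .
lemma dd_iff: "a < l \<Longrightarrow> a < dd \<longleftrightarrow> a + 1 \<le> L ! a" using durfee_props(2)[OF L] .
lemma Lk: "a < l \<Longrightarrow> L ! a \<le> k" using ydiag_D(3)[OF L] .
lemma Lmono: "i \<le> j \<Longrightarrow> j < l \<Longrightarrow> L ! j \<le> L ! i" using ydiag_D(2)[OF L] .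

lemma small_le: "a < l \<Longrightarrow> dd \<le> a \<Longrightarrow> L ! a \<le> dd"
proof -
  assume a: "a < l" "dd \<le> a"
  have "dd < l" using a by simp
  then have "\<not> dd + 1 \<le> L ! dd" using dd_iff[of dd] by simp
  then have "L ! dd \<le> dd" by simp
  moreover have "L ! a \<le> L ! dd" using Lmono a by simp
  ultimately show ?thesis by simp
qed

lemma RR_val:
  assumes j: "j < l"
  shows "RR j = (if j < dd then (k + l) - L ! (dd - 1 - j) + (dd - 1 - j) else (l - 1 - j + dd) - L ! (l - 1 - j + dd))"
proof (cases "j < dd")
  case True
  have "pid l dd j = dd - 1 - j" using pid_val[OF dd_le j] True by simp
  moreover have "dd - 1 - j < dd" using True by simp
  ultimately show ?thesis using True by (simp add: rr_def)
next
  case False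
  have "pid l dd j = l - 1 - j + dd" using pid_val[OF dd_le j] False by simp
  moreover have "\<not> l - 1 - j + dd < dd" by simp
  ultimately show ?thesis using False by (simp add: rr_def)
qed

lemma nat_aux: "y \<le> x \<Longrightarrow> x \<le> b \<Longrightarrow> b - x < Suc b - (y::nat)" by arith

lemma RR_sdec: "sdec l RR"
  unfolding sdec_def
proof (intro allI impI)
  fix j assume j: "Suc j < l"
  show "RR (Suc j) < RR j"
  proof (cases "Suc j < dd")
    case True
    have "L ! (dd - 1 - j) \<le> L ! (dd - 1 - Suc j)" using Lmono[of "dd - 1 - Suc j" "dd - 1 - j"] True dd_le j by simp
    moreover have "L ! (dd - 1 - Suc j) \<le> k" using Lk[of "dd - 1 - Suc j"] True dd_le by simp
    moreover have "L ! (dd - 1 - j) \<le> k" using Lk[of "dd - 1 - j"] True dd_le by simp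
    ultimately have ab: "k + l - L ! (dd - 1 - Suc j) \<le> k + l - L ! (dd - 1 - j)" by (intro diff_le_mono2)
    have e1: "RR j = (k + l) - L ! (dd - 1 - j) + (dd - 1 - j)" using RR_val[of j] j True by simp
    have e2: "RR (Suc j) = (k + l) - L ! (dd - 1 - Suc j) + (dd - 1 - Suc j)" using RR_val[of "Suc j"] j True by simp
    have "dd - 1 - Suc j < dd - 1 - j" using True by simp
    then show ?thesis unfolding e1 e2 using ab by (rule add_le_less_mono[rotated])
  next
    case False
    show ?thesis
    proof (cases "j < dd")
      case True
      then have jd: "j = dd - 1" using False by simp
      have "RR j = (k + l) - L ! 0" using RR_val[of j] True jd j by simp
      moreover have "L ! 0 \<le> k" using Lk[of 0] l by simp
      moreover have "RR (Suc j) = (l - 1 - Suc j + dd) - L ! (l - 1 - Suc j + dd)"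
        using RR_val[of "Suc j"] False j by simp
      moreover have "l - 1 - Suc j + dd \<le> l - 1" using j jd by simp
      ultimately have r2: "RR (Suc j) = (l - 1 - Suc j + dd) - L ! (l - 1 - Suc j + dd)"
        and bb: "l - 1 - Suc j + dd \<le> l - 1" and r1: "RR j = (k + l) - L ! 0" and l0: "L ! 0 \<le> k" by simp_all
      have "RR (Suc j) \<le> l - 1 - Suc j + dd" unfolding r2 by (rule diff_le_self)
      then have "RR (Suc j) \<le> l - 1" using bb by (rule order.trans)
      moreover have "l \<le> RR j" unfolding r1 using l0 by simp
      ultimately show ?thesis using l by simp
    next
      case nj: False
      let ?a = "l - 1 - j + dd" and ?b = "l - 1 - Suc j + dd"
      have ab: "?a = Suc ?b" using j nj by simp
      have Ab: "L ! ?a \<le> L ! ?b" using Lmono[of ?b ?a] ab j nj by simp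
      have Bb: "L ! ?b \<le> ?b"
      proof -
        have b1: "?b < l" "dd \<le> ?b" using j nj by arith+
        then have "L ! ?b \<le> dd" by (rule small_le)
        then show ?thesis using b1(2) by simp
      qed
      have jl: "j < l" using j by simp
      have e1: "RR j = ?a - L ! ?a" using RR_val[OF jl] if_not_P[OF nj] by (simp only:)
      have nsj: "\<not> Suc j < dd" using nj by simp
      have e2: "RR (Suc j) = ?b - L ! ?b" using RR_val[OF j] if_not_P[OF nsj] by (simp only:)
      have "?b - L ! ?b < Suc ?b - L ! ?a" by (rule nat_aux[OF Ab Bb])
      then show ?thesis unfolding e1 e2 ab[symmetric] .
    qed
  qed
qed

lemma RR_0: "RR 0 < k + l"
proof (cases "0 < dd")
  case True
  have "dd \<le> L ! (dd - 1)" using dd_iff[of "dd - 1"] True dd_le by simp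
  moreover have "L ! (dd - 1) \<le> k" using Lk[of "dd - 1"] True dd_le by simp
  ultimately show ?thesis using RR_val[of 0] True l by simp
next
  case False
  then show ?thesis using RR_val[of 0] l by simp
qed

lemma bar_part: "bar_diag k l L = part l RR"
proof (rule nth_equalityI)
  show "length (bar_diag k l L) = length (part l RR)" by (simp add: bar_diag_def part_def Let_def del: upt_Suc)
  fix j assume "j < length (bar_diag k l L)"
  then have j: "j < l" by (simp add: bar_diag_def Let_def del: upt_Suc)
  have b: "bar_diag k l L ! j = (if j + 1 \<le> dd then dd + k - L ! (dd - (j + 1)) else dd - L ! (l - (j + 1) + dd))"
    using j by (simp add: bar_diag_def Let_def del: upt_Suc)
  show "bar_diag k l L ! j = part l RR ! j"
  proof (cases "j < dd")
    case True
    have "L ! (dd - 1 - j) \<le> k" using Lk[of "dd - 1 - j"] True dd_le by simp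
    then show ?thesis using b True RR_val[OF j] j by (simp add: part_def)
  next
    case False
    have "L ! (l - 1 - j + dd) \<le> dd" using small_le[of "l - 1 - j + dd"] j False by simp
    moreover have "l - (j + 1) + dd = l - 1 - j + dd" by simp
    ultimately show ?thesis using b False RR_val[OF j] j by (simp add: part_def)
  qed
qed

lemma bar_ydiag: "bar_diag k l L \<in> ydiag k l"
  unfolding bar_part by (rule part_ydiag[OF RR_sdec RR_0 l])

lemma qv_bar: "j < l \<Longrightarrow> qv l (bar_diag k l L) j = RR j"
  unfolding bar_part by (rule qv_part[OF RR_sdec])

lemma prod_if_lt: "(\<Prod>a<m. if a < d then c else 1) = (c::'a::comm_monoid_mult) ^ min d m"
proof (induction m)
  case 0 then show ?case by simp
next
  case (Suc m)
  show ?case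
  proof (cases "m < d")
    case True
    then have "min d (Suc m) = Suc (min d m)" by simp
    then show ?thesis using Suc True by (simp add: power_Suc2)
  next
    case False
    then have "min d (Suc m) = min d m" by simp
    then show ?thesis using Suc False by simp
  qed
qed

lemma alt_rr:
  fixes \<zeta> :: "nat \<Rightarrow> complex"
  assumes hz: "\<And>b. b < l \<Longrightarrow> \<zeta> b ^ (k + l) = \<epsilon>" and hc: "\<And>b. b < l \<Longrightarrow> cnj (\<zeta> b) * \<zeta> b = 1"
  shows "alt l \<zeta> (rr k l L) = \<epsilon> ^ dd * (\<Prod>b<l. \<zeta> b ^ (l - 1)) * cnj (alt l \<zeta> (qv l L))"
proof -
  have s1: "alt l \<zeta> (rr k l L) = altg l (\<lambda>a b. (if a < dd then \<epsilon> else 1) * (\<zeta> b ^ (l - 1) * cnj (\<zeta> b) ^ qv l L a))"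
    unfolding alt_def
  proof (rule altg_cong)
    fix a b assume a: "a < l" and b: "b < l"
    have key: "\<zeta> b ^ rr k l L a = \<zeta> b ^ (rr k l L a + qv l L a) * cnj (\<zeta> b) ^ qv l L a"
    proof -
      have "\<zeta> b ^ rr k l L a = \<zeta> b ^ rr k l L a * (cnj (\<zeta> b) * \<zeta> b) ^ qv l L a" using hc[OF b] by simp
      then show ?thesis by (simp add: power_mult_distrib power_add mult_ac)
    qed
    show "\<zeta> b ^ rr k l L a = (if a < dd then \<epsilon> else 1) * (\<zeta> b ^ (l - 1) * cnj (\<zeta> b) ^ qv l L a)"
    proof (cases "a < dd")
      case True
      have "L ! a \<le> k" using Lk[OF a] .
      then have "rr k l L a + qv l L a = (k + l) + (l - 1)" using True a by (simp add: rr_def qv_def)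
      then show ?thesis using key True hz[OF b] by (simp add: power_add)
    next
      case False
      have "L ! a \<le> a" using dd_iff[OF a] False by simp
      then have "rr k l L a + qv l L a = l - 1" using False a by (simp add: rr_def qv_def)
      then show ?thesis using key False by simp
    qed
  qed
  have s2: "altg l (\<lambda>a b. (if a < dd then \<epsilon> else 1) * (\<zeta> b ^ (l - 1) * cnj (\<zeta> b) ^ qv l L a))
      = (\<Prod>a<l. if a < dd then \<epsilon> else 1) * altg l (\<lambda>a b. \<zeta> b ^ (l - 1) * cnj (\<zeta> b) ^ qv l L a)"
    by (rule altg_rowscale)
  have s3: "altg l (\<lambda>a b. \<zeta> b ^ (l - 1) * cnj (\<zeta> b) ^ qv l L a) = (\<Prod>b<l. \<zeta> b ^ (l - 1)) * altg l (\<lambda>a b. cnj (\<zeta> b) ^ qv l L a)"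
    by (rule altg_colscale[symmetric])
  have s4: "altg l (\<lambda>a b. cnj (\<zeta> b) ^ qv l L a) = cnj (alt l \<zeta> (qv l L))"
    by (simp add: alt_def altg_def)
  have s5: "(\<Prod>a<l. if a < dd then \<epsilon> else 1) = \<epsilon> ^ dd" using prod_if_lt[where m=l and d=dd and c=\<epsilon>] dd_le by simp
  show ?thesis by (simp only: s1 s2 s3 s4 s5 mult.assoc)
qed

lemma reassoc: "s * e = 1 \<Longrightarrow> A * s * (e * P * C) = A * P * (C::complex)"
proof -
  assume se: "s * e = 1"
  have "A * s * (e * P * C) = A * (s * e) * P * C" by (simp add: mult.assoc)
  then show ?thesis using se by simp
qed

lemma alt_bar:
  fixes \<zeta> :: "nat \<Rightarrow> complex"
  assumes hz: "\<And>b. b < l \<Longrightarrow> \<zeta> b ^ (k + l) = \<epsilon>" and hc: "\<And>b. b < l \<Longrightarrow> cnj (\<zeta> b) * \<zeta> b = 1"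
    and eps: "\<epsilon> = (-1) ^ (l - 1)"
  shows "alt l \<zeta> (qv l (bar_diag k l L)) = of_int (sign (rv l)) * (\<Prod>b<l. \<zeta> b ^ (l - 1)) * cnj (alt l \<zeta> (qv l L))"
proof -
  have "alt l \<zeta> (qv l (bar_diag k l L)) = alt l \<zeta> RR" by (rule alt_cong) (rule qv_bar)
  also have "\<dots> = altg l (\<lambda>a b. (\<lambda>a b. \<zeta> b ^ rr k l L a) (pid l dd a) b)" by (simp add: alt_def)
  also have "\<dots> = of_int (sign (pid l dd)) * alt l \<zeta> (rr k l L)"
    unfolding alt_def by (rule altg_rowperm[OF pid_permutes[OF l]])
  also have "\<dots> = of_int (sign (rv l)) * (-1) ^ ((l - 1) * dd) * (\<epsilon> ^ dd * (\<Prod>b<l. \<zeta> b ^ (l - 1)) * cnj (alt l \<zeta> (qv l L)))"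
  proof -
    have ar: "alt l \<zeta> (rr k l L) = \<epsilon> ^ dd * (\<Prod>b<l. \<zeta> b ^ (l - 1)) * cnj (alt l \<zeta> (qv l L))"
      by (rule alt_rr[OF hz hc])
    have sp: "sign (pid l dd) = sign (rv l) * (-1) ^ ((l - 1) * dd)" by (rule sign_pid[OF l])
    show ?thesis unfolding ar sp by simp
  qed
  also have "(-1) ^ ((l - 1) * dd) * \<epsilon> ^ dd = (1::complex)"
    unfolding eps by (simp add: power_mult[symmetric] power_add[symmetric] mult_2[symmetric])
  then have "of_int (sign (rv l)) * (-1) ^ ((l - 1) * dd) * (\<epsilon> ^ dd * (\<Prod>b<l. \<zeta> b ^ (l - 1)) * cnj (alt l \<zeta> (qv l L)))
      = of_int (sign (rv l)) * (\<Prod>b<l. \<zeta> b ^ (l - 1)) * cnj (alt l \<zeta> (qv l L))"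
    by (rule reassoc)
  finally show ?thesis .
qed

end

lemma bar_zero: "bar_diag k l (replicate l 0) = replicate l 0"
proof -
  have "durfee l (replicate l 0) = 0" by (auto simp: durfee_def)
  then show ?thesis
    by (intro nth_equalityI) (auto simp: bar_diag_def Let_def simp del: upt_Suc)
qed

lemma main_kl:
  fixes p :: "nat list \<Rightarrow> complex"
  assumes k: "1 \<le> k" and l: "1 \<le> l" and sp: "spec_point k l p"
  shows "\<And>L. L \<in> ydiag k l \<Longrightarrow> p (bar_diag k l L) = cnj (p L)"
proof -
  define n where "n = k + l"
  define \<epsilon> :: complex where "\<epsilon> = (-1) ^ (l - 1)"
  have n1: "1 < n" using k l by (simp add: n_def)
  have eps1: "\<epsilon> = 1 \<or> \<epsilon> = -1" unfolding \<epsilon>_def by (cases "even (l - 1)") auto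
  define Z where "Z = PiE {..<l} (\<lambda>_. Om n \<epsilon>)"
  define u where "u \<zeta> L = alt l \<zeta> (qv l L)" for \<zeta> L
  define x where "x e = p (rowd l e)" for e
  define C :: complex where "C = fact l * of_nat n ^ l"
  have C0: "C \<noteq> 0" using n1 by (simp add: C_def)
  have finZ: "finite Z" unfolding Z_def by (intro finite_PiE) (simp_all add: Om_finite[OF n1 eps1])
  have fin: "finite (ydiag k l)" by (rule ydiag_finite)
  have p0: "p (replicate l 0) = 1" by (rule spec_one[OF sp])
  have eig: "\<And>e L. e \<le> k \<Longrightarrow> L \<in> ydiag k l \<Longrightarrow> (\<Sum>M\<in>{M\<in>ydiag k l. pieri_coeff k l e L M}. p M) = x e * p L"
    unfolding x_def by (rule spec_eig[OF sp l])
  have hzZ: "\<And>\<zeta> b. \<zeta> \<in> Z \<Longrightarrow> b < l \<Longrightarrow> \<zeta> b \<in> Om n \<epsilon>" unfolding Z_def by (auto simp: PiE_iff)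
  have ueig: "\<And>\<zeta> e L. \<zeta> \<in> Z \<Longrightarrow> e \<le> k \<Longrightarrow> L \<in> ydiag k l \<Longrightarrow>
      (\<Sum>M\<in>{M\<in>ydiag k l. pieri_coeff k l e L M}. u \<zeta> M) = yv l \<zeta> e * u \<zeta> L"
  proof -
    fix \<zeta> e L assume z: "\<zeta> \<in> Z" and e: "e \<le> k" and L: "L \<in> ydiag k l"
    have hz: "\<And>b. b < l \<Longrightarrow> \<zeta> b ^ (k + l) = \<epsilon>" using hzZ[OF z] by (simp add: Om_def n_def)
    show "(\<Sum>M\<in>{M\<in>ydiag k l. pieri_coeff k l e L M}. u \<zeta> M) = yv l \<zeta> e * u \<zeta> L"
      unfolding u_def by (rule pieri_alt[OF l L e hz \<epsilon>_def])
  qed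
  define c where "c \<zeta> = (\<Sum>L\<in>ydiag k l. p L * cnj (u \<zeta> L))" for \<zeta>
  have span: "\<And>\<mu>. \<mu> \<in> ydiag k l \<Longrightarrow> (\<Sum>\<zeta>\<in>Z. c \<zeta> * u \<zeta> \<mu>) = C * p \<mu>"
  proof -
    fix \<mu> assume mu: "\<mu> \<in> ydiag k l"
    have "(\<Sum>\<zeta>\<in>Z. c \<zeta> * u \<zeta> \<mu>) = (\<Sum>L\<in>ydiag k l. p L * (\<Sum>\<zeta>\<in>Z. cnj (u \<zeta> L) * u \<zeta> \<mu>))"
      unfolding c_def by (simp add: sum_distrib_left sum_distrib_right sum.swap[of _ Z] mult.assoc)
    also have "\<dots> = (\<Sum>L\<in>ydiag k l. if L = \<mu> then p L * C else 0)"
    proof (rule sum.cong[OF refl])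
      fix L assume L: "L \<in> ydiag k l"
      have "(\<Sum>\<zeta>\<in>Z. cnj (u \<zeta> L) * u \<zeta> \<mu>) = (if (\<forall>a<l. qv l L a = qv l \<mu> a) then C else 0)"
        unfolding Z_def u_def C_def
        by (rule alt_orth[OF n1 eps1 qv_sdec[OF L] qv_sdec[OF mu]]) (simp_all add: qv_bound[OF L] qv_bound[OF mu] n_def)
      also have "(\<forall>a<l. qv l L a = qv l \<mu> a) \<longleftrightarrow> L = \<mu>"
      proof
        assume "\<forall>a<l. qv l L a = qv l \<mu> a"
        then have "part l (qv l L) = part l (qv l \<mu>)" by (simp add: part_def)
        then show "L = \<mu>" using part_qv[OF L] part_qv[OF mu] by simp
      qed simp
      finally show "p L * (\<Sum>\<zeta>\<in>Z. cnj (u \<zeta> L) * u \<zeta> \<mu>) = (if L = \<mu> then p L * C else 0)" by simp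
    qed
    also have "\<dots> = C * p \<mu>" using mu fin by (simp add: mult.commute)
    finally show "(\<Sum>\<zeta>\<in>Z. c \<zeta> * u \<zeta> \<mu>) = C * p \<mu>" .
  qed
  have exZ: "\<exists>\<zeta>\<in>Z. c \<zeta> \<noteq> 0 \<and> (\<forall>e. 1 \<le> e \<longrightarrow> e \<le> k \<longrightarrow> yv l \<zeta> e = x e)"
  proof (rule ccontr)
    assume na: "\<not> ?thesis"
    define S where "S = {\<zeta>\<in>Z. c \<zeta> \<noteq> 0}"
    have finS: "finite S" using finZ by (simp add: S_def)
    have exE: "\<And>\<zeta>. \<zeta> \<in> S \<Longrightarrow> \<exists>e. e \<le> k \<and> yv l \<zeta> e \<noteq> x e" using na by (auto simp: S_def)
    define E where "E \<zeta> = (SOME e. e \<le> k \<and> yv l \<zeta> e \<noteq> x e)" for \<zeta>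
    have E: "\<And>\<zeta>. \<zeta> \<in> S \<Longrightarrow> E \<zeta> \<le> k \<and> yv l \<zeta> (E \<zeta>) \<noteq> x (E \<zeta>)"
      unfolding E_def by (rule someI_ex) (rule exE)
    have claim: "finite T \<Longrightarrow> T \<subseteq> S \<Longrightarrow> (\<forall>\<mu>\<in>ydiag k l. (\<Sum>\<zeta>\<in>Z. c \<zeta> * (\<Prod>\<eta>\<in>T. yv l \<zeta> (E \<eta>) - yv l \<eta> (E \<eta>)) * u \<zeta> \<mu>)
        = C * (\<Prod>\<eta>\<in>T. x (E \<eta>) - yv l \<eta> (E \<eta>)) * p \<mu>)" for T
    proof (induction T rule: finite_induct)
      case empty then show ?case using span by simp
    next
      case (insert \<eta>0 T)
      have IH: "\<And>\<mu>. \<mu> \<in> ydiag k l \<Longrightarrow> (\<Sum>\<zeta>\<in>Z. c \<zeta> * (\<Prod>\<eta>\<in>T. yv l \<zeta> (E \<eta>) - yv l \<eta> (E \<eta>)) * u \<zeta> \<mu>)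
        = C * (\<Prod>\<eta>\<in>T. x (E \<eta>) - yv l \<eta> (E \<eta>)) * p \<mu>" using insert by auto
      have \<eta>S: "\<eta>0 \<in> S" using insert by auto
      define e where "e = E \<eta>0"
      define s where "s = yv l \<eta>0 e"
      have ek: "e \<le> k" using E[OF \<eta>S] by (simp add: e_def)
      define Pz where "Pz \<zeta> = (\<Prod>\<eta>\<in>T. yv l \<zeta> (E \<eta>) - yv l \<eta> (E \<eta>))" for \<zeta>
      define Px where "Px = (\<Prod>\<eta>\<in>T. x (E \<eta>) - yv l \<eta> (E \<eta>))"
      show ?case
      proof
        fix \<mu> assume mu: "\<mu> \<in> ydiag k l"
        have "(\<Sum>\<zeta>\<in>Z. c \<zeta> * (\<Prod>\<eta>\<in>insert \<eta>0 T. yv l \<zeta> (E \<eta>) - yv l \<eta> (E \<eta>)) * u \<zeta> \<mu>)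
            = (\<Sum>\<zeta>\<in>Z. c \<zeta> * Pz \<zeta> * (yv l \<zeta> e * u \<zeta> \<mu>)) - s * (\<Sum>\<zeta>\<in>Z. c \<zeta> * Pz \<zeta> * u \<zeta> \<mu>)"
          using insert by (simp add: Pz_def e_def s_def sum_subtractf sum_distrib_left algebra_simps)
        also have "(\<Sum>\<zeta>\<in>Z. c \<zeta> * Pz \<zeta> * (yv l \<zeta> e * u \<zeta> \<mu>))
            = (\<Sum>\<zeta>\<in>Z. c \<zeta> * Pz \<zeta> * (\<Sum>M\<in>{M\<in>ydiag k l. pieri_coeff k l e \<mu> M}. u \<zeta> M))"
          by (intro sum.cong refl) (simp add: ueig[OF _ ek mu])
        also have "\<dots> = (\<Sum>M\<in>{M\<in>ydiag k l. pieri_coeff k l e \<mu> M}. \<Sum>\<zeta>\<in>Z. c \<zeta> * Pz \<zeta> * u \<zeta> M)"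
          by (simp add: sum_distrib_left sum.swap[of _ Z])
        also have "\<dots> = (\<Sum>M\<in>{M\<in>ydiag k l. pieri_coeff k l e \<mu> M}. C * Px * p M)"
          by (intro sum.cong refl) (simp add: IH Pz_def Px_def)
        also have "\<dots> = C * Px * (x e * p \<mu>)"
          by (simp add: sum_distrib_left[symmetric] eig[OF ek mu])
        also have "(\<Sum>\<zeta>\<in>Z. c \<zeta> * Pz \<zeta> * u \<zeta> \<mu>) = C * Px * p \<mu>"
          using IH[OF mu] by (simp add: Pz_def Px_def)
        finally show "(\<Sum>\<zeta>\<in>Z. c \<zeta> * (\<Prod>\<eta>\<in>insert \<eta>0 T. yv l \<zeta> (E \<eta>) - yv l \<eta> (E \<eta>)) * u \<zeta> \<mu>)
            = C * (\<Prod>\<eta>\<in>insert \<eta>0 T. x (E \<eta>) - yv l \<eta> (E \<eta>)) * p \<mu>"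
          using insert by (simp add: Px_def e_def s_def algebra_simps)
      qed
    qed
    have z0: "replicate l 0 \<in> ydiag k l" by (rule replicate_ydiag)
    have "(\<Sum>\<zeta>\<in>Z. c \<zeta> * (\<Prod>\<eta>\<in>S. yv l \<zeta> (E \<eta>) - yv l \<eta> (E \<eta>)) * u \<zeta> (replicate l 0)) = 0"
    proof (rule sum.neutral, rule ballI)
      fix \<zeta> assume z: "\<zeta> \<in> Z"
      show "c \<zeta> * (\<Prod>\<eta>\<in>S. yv l \<zeta> (E \<eta>) - yv l \<eta> (E \<eta>)) * u \<zeta> (replicate l 0) = 0"
      proof (cases "\<zeta> \<in> S")
        case True
        then have "(\<Prod>\<eta>\<in>S. yv l \<zeta> (E \<eta>) - yv l \<eta> (E \<eta>)) = 0"
          using finS by (intro prod_zero) auto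
        then show ?thesis by simp
      next
        case False then show ?thesis using z by (simp add: S_def)
      qed
    qed
    moreover have "C * (\<Prod>\<eta>\<in>S. x (E \<eta>) - yv l \<eta> (E \<eta>)) * p (replicate l 0) \<noteq> 0"
    proof -
      have "\<forall>a\<in>S. x (E a) \<noteq> yv l a (E a)" using E by (metis)
      then show ?thesis using C0 p0 finS by (simp add: prod_zero_iff)
    qed
    ultimately show False using claim[OF finS subset_refl] z0 by simp
  qed
  then obtain \<zeta> where z: "\<zeta> \<in> Z" and cz: "c \<zeta> \<noteq> 0" and yx: "\<And>e. 1 \<le> e \<Longrightarrow> e \<le> k \<Longrightarrow> yv l \<zeta> e = x e"
    by blast
  let ?o = "replicate l 0"
  have z0: "?o \<in> ydiag k l" by (rule replicate_ydiag)
  define v where "v L = u \<zeta> L - u \<zeta> ?o * p L" for L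
  have vz: "\<And>L. L \<in> ydiag k l \<Longrightarrow> v L = 0"
  proof (rule uniq[OF l])
    fix e L assume e1: "1 \<le> e" and ek: "e \<le> k" and L: "L \<in> ydiag k l"
    show "(\<Sum>M\<in>{M\<in>ydiag k l. pieri_coeff k l e L M}. v M) = x e * v L"
      unfolding v_def sum_subtractf sum_distrib_left[symmetric]
      using ueig[OF z ek L] eig[OF ek L] yx[OF e1 ek] by (simp add: algebra_simps)
  next
    show "v ?o = 0" using p0 by (simp add: v_def)
  qed
  have uo: "u \<zeta> ?o \<noteq> 0"
  proof
    assume "u \<zeta> ?o = 0"
    then have "\<And>L. L \<in> ydiag k l \<Longrightarrow> u \<zeta> L = 0" using vz by (simp add: v_def)
    then have "c \<zeta> = 0" by (simp add: c_def)
    with cz show False by simp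
  qed
  have pu: "\<And>L. L \<in> ydiag k l \<Longrightarrow> p L = u \<zeta> L / u \<zeta> ?o"
    using vz uo by (simp add: v_def field_simps)
  have hz: "\<And>b. b < l \<Longrightarrow> \<zeta> b ^ (k + l) = \<epsilon>" using hzZ[OF z] by (simp add: Om_def n_def)
  have hc: "\<And>b. b < l \<Longrightarrow> cnj (\<zeta> b) * \<zeta> b = 1" using hzZ[OF z] Om_cnj[OF n1 eps1] by blast
  define K where "K = of_int (sign (rv l)) * (\<Prod>b<l. \<zeta> b ^ (l - 1))"
  have ub: "\<And>L. L \<in> ydiag k l \<Longrightarrow> u \<zeta> (bar_diag k l L) = K * cnj (u \<zeta> L)"
    unfolding u_def K_def by (rule alt_bar[OF l _ hz hc \<epsilon>_def])
  have "u \<zeta> ?o = K * cnj (u \<zeta> ?o)" using ub[OF z0] by (simp add: bar_zero)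
  then have K0: "K \<noteq> 0" using uo by auto
  fix L assume L: "L \<in> ydiag k l"
  have bL: "bar_diag k l L \<in> ydiag k l" by (rule bar_ydiag[OF l L])
  have "p (bar_diag k l L) = K * cnj (u \<zeta> L) / u \<zeta> ?o" using pu[OF bL] ub[OF L] by simp
  also have "u \<zeta> ?o = K * cnj (u \<zeta> ?o)" by fact
  also have "K * cnj (u \<zeta> L) / (K * cnj (u \<zeta> ?o)) = cnj (u \<zeta> L / u \<zeta> ?o)" using K0 by simp
  also have "\<dots> = cnj (p L)" using pu[OF L] by simp
  finally show "p (bar_diag k l L) = cnj (p L)" .
qed

theorem mainTheorem10:
  fixes k n :: nat and X :: "nat list \<Rightarrow> int" and p :: "nat list \<Rightarrow> complex"
  assumes "0 < k" and "k < n"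
    and "supported k (n - k) X"
    and "spec_point k (n - k) p"
  shows "evalpt k (n - k) p (of_int \<circ> qbar k (n - k) X)
         = cnj (evalpt k (n - k) p (of_int \<circ> X))"
proof -
  define l where "l = n - k"
  have k1: "1 \<le> k" and l1: "1 \<le> l" using assms(1,2) by (simp_all add: l_def)
  have sp: "spec_point k l p" using assms(4) by (simp add: l_def)
  have fin: "finite (ydiag k l)" by (rule ydiag_finite)
  have bar_in: "\<And>L. L \<in> ydiag k l \<Longrightarrow> bar_diag k l L \<in> ydiag k l" by (rule bar_ydiag[OF l1])
  have "evalpt k l p (of_int \<circ> qbar k l X)
      = (\<Sum>\<mu>\<in>ydiag k l. \<Sum>L\<in>{L\<in>ydiag k l. bar_diag k l L = \<mu>}. of_int (X L) * p \<mu>)"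
    by (simp add: evalpt_def qbar_def sum_distrib_right)
  also have "\<dots> = (\<Sum>\<mu>\<in>ydiag k l. \<Sum>L\<in>ydiag k l. if bar_diag k l L = \<mu> then of_int (X L) * p (bar_diag k l L) else 0)"
  proof (rule sum.cong[OF refl])
    fix \<mu> assume "\<mu> \<in> ydiag k l"
    have "(\<Sum>L\<in>{L\<in>ydiag k l. bar_diag k l L = \<mu>}. of_int (X L) * p \<mu>)
        = (\<Sum>L\<in>ydiag k l. if bar_diag k l L = \<mu> then of_int (X L) * p \<mu> else 0)"
      by (rule sum.inter_filter[OF fin])
    also have "\<dots> = (\<Sum>L\<in>ydiag k l. if bar_diag k l L = \<mu> then of_int (X L) * p (bar_diag k l L) else 0)"
      by (intro sum.cong refl) auto
    finally show "(\<Sum>L\<in>{L\<in>ydiag k l. bar_diag k l L = \<mu>}. of_int (X L) * p \<mu>)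
        = (\<Sum>L\<in>ydiag k l. if bar_diag k l L = \<mu> then of_int (X L) * p (bar_diag k l L) else 0)" .
  qed
  also have "\<dots> = (\<Sum>L\<in>ydiag k l. \<Sum>\<mu>\<in>ydiag k l. if bar_diag k l L = \<mu> then of_int (X L) * p (bar_diag k l L) else 0)"
    by (rule sum.swap)
  also have "\<dots> = (\<Sum>L\<in>ydiag k l. of_int (X L) * p (bar_diag k l L))"
    using fin bar_in by (intro sum.cong refl) (simp add: sum.delta)
  also have "\<dots> = (\<Sum>L\<in>ydiag k l. of_int (X L) * cnj (p L))"
    by (intro sum.cong refl) (simp add: main_kl[OF k1 l1 sp])
  also have "\<dots> = cnj (evalpt k l p (of_int \<circ> X))"
    by (simp add: evalpt_def)
  finally show ?thesis by (simp add: l_def)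
qed

end
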